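(* Let $n\ge 2$ and let $A_1,\ldots,A_{n+1}$ be pairwise skew $(n-1)$-spaces of $\mathrm{PG}(2n,q)$. The number of $n$-spaces of $\mathrm{PG}(2n,q)$ that intersect every $A_i$, $1\leq i\leq n+1$, is $\mathcal{O}(q^{n^2-1})$.
   Context: $\mathrm{PG}(2n,q)$ is the projective space of projective dimension $2n$ over the field of order $q$; an $i$-space is a subspace of projective dimension $i$; skew means disjoint. $\mathcal{O}(q^m)$ means bounded above by $Cq^m$ with $C$ depending only on $n$. *)

theory Defs
  imports Complex_Main "HOL-Algebra.Ring"
begin

text \<open>The vector space F^N over a field R (HOL-Algebra record), vectors as
functions nat => 'a that are zero outside the indices 0..N-1.\<close>

definition vecs :: "('a, 'm) ring_scheme \<Rightarrow> nat \<Rightarrow> (nat \<Rightarrow> 'a) set" where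
  "vecs R N = {v. (\<forall>i<N. v i \<in> carrier R) \<and> (\<forall>i\<ge>N. v i = \<zero>\<^bsub>R\<^esub>)}"

definition vzero :: "('a, 'm) ring_scheme \<Rightarrow> nat \<Rightarrow> 'a" where
  "vzero R = (\<lambda>i. \<zero>\<^bsub>R\<^esub>)"

definition vadd :: "('a, 'm) ring_scheme \<Rightarrow> (nat \<Rightarrow> 'a) \<Rightarrow> (nat \<Rightarrow> 'a) \<Rightarrow> nat \<Rightarrow> 'a" where
  "vadd R v w = (\<lambda>i. v i \<oplus>\<^bsub>R\<^esub> w i)"

definition vsmult :: "('a, 'm) ring_scheme \<Rightarrow> 'a \<Rightarrow> (nat \<Rightarrow> 'a) \<Rightarrow> nat \<Rightarrow> 'a" where
  "vsmult R a v = (\<lambda>i. a \<otimes>\<^bsub>R\<^esub> v i)"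

definition lsubspace :: "('a, 'm) ring_scheme \<Rightarrow> nat \<Rightarrow> (nat \<Rightarrow> 'a) set \<Rightarrow> bool" where
  "lsubspace R N W \<longleftrightarrow> W \<subseteq> vecs R N \<and> vzero R \<in> W \<and>
     (\<forall>v\<in>W. \<forall>w\<in>W. vadd R v w \<in> W) \<and>
     (\<forall>a\<in>carrier R. \<forall>v\<in>W. vsmult R a v \<in> W)"

definition lincomb :: "('a, 'm) ring_scheme \<Rightarrow> (nat \<Rightarrow> 'a) \<Rightarrow> (nat \<Rightarrow> 'a) list \<Rightarrow> nat \<Rightarrow> 'a" where
  "lincomb R c vs = (\<lambda>i. finsum R (\<lambda>j. c j \<otimes>\<^bsub>R\<^esub> (vs ! j) i) {..<length vs})"

definition lin_indep :: "('a, 'm) ring_scheme \<Rightarrow> (nat \<Rightarrow> 'a) list \<Rightarrow> bool" where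
  "lin_indep R vs \<longleftrightarrow> (\<forall>c. (\<forall>j<length vs. c j \<in> carrier R) \<and> lincomb R c vs = vzero R
      \<longrightarrow> (\<forall>j<length vs. c j = \<zero>\<^bsub>R\<^esub>))"

definition subspace_dim :: "('a, 'm) ring_scheme \<Rightarrow> nat \<Rightarrow> nat \<Rightarrow> (nat \<Rightarrow> 'a) set \<Rightarrow> bool" where
  "subspace_dim R N d W \<longleftrightarrow> lsubspace R N W \<and>
     (\<exists>vs. length vs = d \<and> set vs \<subseteq> W \<and> lin_indep R vs \<and>
        W = {lincomb R c vs | c. \<forall>j<length vs. c j \<in> carrier R})"

text \<open>An i-space of PG(m, q), q = |carrier R|: an (i+1)-dimensional subspace of F^(m+1).\<close>
definition proj_space :: "('a, 'm) ring_scheme \<Rightarrow> nat \<Rightarrow> nat \<Rightarrow> (nat \<Rightarrow> 'a) set \<Rightarrow> bool" where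
  "proj_space R m i W \<longleftrightarrow> subspace_dim R (Suc m) (Suc i) W"

text \<open>Projective subspaces are skew iff the vector subspaces meet only in 0.\<close>
definition skew :: "('a, 'm) ring_scheme \<Rightarrow> (nat \<Rightarrow> 'a) set \<Rightarrow> (nat \<Rightarrow> 'a) set \<Rightarrow> bool" where
  "skew R U W \<longleftrightarrow> U \<inter> W = {vzero R}"

definition meets :: "('a, 'm) ring_scheme \<Rightarrow> (nat \<Rightarrow> 'a) set \<Rightarrow> (nat \<Rightarrow> 'a) set \<Rightarrow> bool" where
  "meets R U W \<longleftrightarrow> (\<exists>v\<in>U \<inter> W. v \<noteq> vzero R)"

end

theory Submission
  imports Defs "HOL-Library.FuncSet"
begin

definition spn :: "('a,'m) ring_scheme \<Rightarrow> (nat \<Rightarrow> 'a) list \<Rightarrow> (nat \<Rightarrow> 'a) set" where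
  "spn R vs = {lincomb R c vs | c. \<forall>j<length vs. c j \<in> carrier R}"

definition scl :: "('a,'m) ring_scheme \<Rightarrow> (nat \<Rightarrow> 'a) \<Rightarrow> (nat \<Rightarrow> 'a) list \<Rightarrow> (nat \<Rightarrow> 'a) list" where
  "scl R c vs = map (\<lambda>k. vsmult R (c k) (vs!k)) [0..<length vs]"

context field
begin

lemma vecs_coord: "v \<in> vecs R N \<Longrightarrow> v i \<in> carrier R"
  unfolding vecs_def by (cases "i < N") auto

lemma vecs_high: "v \<in> vecs R N \<Longrightarrow> N \<le> i \<Longrightarrow> v i = \<zero>"
  unfolding vecs_def by auto

lemma vecsI: "(\<And>i. i < N \<Longrightarrow> v i \<in> carrier R) \<Longrightarrow> (\<And>i. N \<le> i \<Longrightarrow> v i = \<zero>) \<Longrightarrow> v \<in> vecs R N"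
  unfolding vecs_def by auto

lemma nth_vecs: "set vs \<subseteq> vecs R N \<Longrightarrow> j < length vs \<Longrightarrow> (vs!j) i \<in> carrier R"
  using vecs_coord nth_mem by blast

lemma lincomb_Pi: "(\<forall>j<length vs. c j \<in> carrier R) \<Longrightarrow> set vs \<subseteq> vecs R N \<Longrightarrow>
   (\<lambda>j. c j \<otimes> (vs ! j) i) \<in> {..<length vs} \<rightarrow> carrier R"
  using nth_vecs by (auto simp: Pi_def)

lemma lincomb_coord: "(\<forall>j<length vs. c j \<in> carrier R) \<Longrightarrow> set vs \<subseteq> vecs R N \<Longrightarrow> lincomb R c vs i \<in> carrier R"
  unfolding lincomb_def by (intro finsum_closed lincomb_Pi) auto

lemma lincomb_vecs: "(\<forall>j<length vs. c j \<in> carrier R) \<Longrightarrow> set vs \<subseteq> vecs R N \<Longrightarrow> lincomb R c vs \<in> vecs R N"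
proof (rule vecsI)
  fix i assume "(\<forall>j<length vs. c j \<in> carrier R)" "set vs \<subseteq> vecs R N"
  then show "lincomb R c vs i \<in> carrier R" by (rule lincomb_coord)
next
  fix i assume a: "(\<forall>j<length vs. c j \<in> carrier R)" "set vs \<subseteq> vecs R N" "N \<le> i"
  have "lincomb R c vs i = (\<Oplus>j\<in>{..<length vs}. \<zero>)"
    unfolding lincomb_def
    by (rule finsum_cong') (use a in \<open>auto simp: Pi_def vecs_high[OF subsetD[OF a(2) nth_mem]]\<close>)
  then show "lincomb R c vs i = \<zero>" by simp
qed

lemma lincomb_cong: "(\<And>j. j < length vs \<Longrightarrow> c j = d j) \<Longrightarrow> \<forall>j<length vs. c j \<in> carrier R \<Longrightarrow> set vs \<subseteq> vecs R N
   \<Longrightarrow> lincomb R c vs = lincomb R d vs"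
  unfolding lincomb_def by (intro ext finsum_cong') (auto simp: Pi_def intro!: nth_vecs)

lemma lincomb_Nil: "lincomb R c [] = vzero R"
  unfolding lincomb_def vzero_def by simp

lemma lincomb_snoc:
  assumes "\<forall>j<Suc (length vs). c j \<in> carrier R" "set vs \<subseteq> vecs R N" "x \<in> vecs R N"
  shows "lincomb R c (vs @ [x]) = vadd R (lincomb R c vs) (vsmult R (c (length vs)) x)"
proof (rule ext)
  fix i
  have c: "\<forall>j<length vs. c j \<in> carrier R" using assms(1) by auto
  have "lincomb R c (vs @ [x]) i = (\<Oplus>j\<in>insert (length vs) {..<length vs}. c j \<otimes> ((vs @ [x]) ! j) i)"
    unfolding lincomb_def by (simp add: lessThan_Suc)
  also have "\<dots> = c (length vs) \<otimes> x i \<oplus> (\<Oplus>j\<in>{..<length vs}. c j \<otimes> ((vs @ [x]) ! j) i)"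
    using assms nth_vecs[of "vs@[x]"] by (subst finsum_insert) (auto simp: Pi_def vecs_coord)
  also have "(\<Oplus>j\<in>{..<length vs}. c j \<otimes> ((vs @ [x]) ! j) i) = lincomb R c vs i"
    unfolding lincomb_def by (rule finsum_cong') (use lincomb_Pi[OF c assms(2)] in \<open>auto simp: nth_append\<close>)
  finally show "lincomb R c (vs @ [x]) i = vadd R (lincomb R c vs) (vsmult R (c (length vs)) x) i"
    unfolding vadd_def vsmult_def using lincomb_coord[OF c assms(2)] assms(1) vecs_coord[OF assms(3)]
    by (simp add: a_comm)
qed

lemma lincomb_add:
  assumes "\<forall>j<length vs. c j \<in> carrier R" "\<forall>j<length vs. d j \<in> carrier R" "set vs \<subseteq> vecs R N"
  shows "lincomb R (\<lambda>j. c j \<oplus> d j) vs = vadd R (lincomb R c vs) (lincomb R d vs)"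
proof (rule ext)
  fix i
  have "lincomb R (\<lambda>j. c j \<oplus> d j) vs i = (\<Oplus>j\<in>{..<length vs}. c j \<otimes> (vs!j) i \<oplus> d j \<otimes> (vs!j) i)"
    unfolding lincomb_def by (rule finsum_cong') (use assms nth_vecs in \<open>auto simp: l_distr Pi_def\<close>)
  also have "\<dots> = lincomb R c vs i \<oplus> lincomb R d vs i"
    unfolding lincomb_def by (rule finsum_addf) (use lincomb_Pi assms in auto)
  finally show "lincomb R (\<lambda>j. c j \<oplus> d j) vs i = vadd R (lincomb R c vs) (lincomb R d vs) i"
    unfolding vadd_def .
qed

lemma lincomb_smult:
  assumes "\<forall>j<length vs. c j \<in> carrier R" "a \<in> carrier R" "set vs \<subseteq> vecs R N"
  shows "lincomb R (\<lambda>j. a \<otimes> c j) vs = vsmult R a (lincomb R c vs)"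
proof (rule ext)
  fix i
  have "lincomb R (\<lambda>j. a \<otimes> c j) vs i = (\<Oplus>j\<in>{..<length vs}. a \<otimes> (c j \<otimes> (vs!j) i))"
    unfolding lincomb_def by (rule finsum_cong') (use assms nth_vecs in \<open>auto simp: m_assoc Pi_def\<close>)
  also have "\<dots> = a \<otimes> lincomb R c vs i"
    unfolding lincomb_def by (rule finsum_rdistr[symmetric]) (use lincomb_Pi assms in auto)
  finally show "lincomb R (\<lambda>j. a \<otimes> c j) vs i = vsmult R a (lincomb R c vs) i"
    unfolding vsmult_def .
qed

lemma lincomb_zero_coeff:
  assumes "set vs \<subseteq> vecs R N"
  shows "lincomb R (\<lambda>j. \<zero>) vs = vzero R"
  unfolding lincomb_def vzero_def
  by (rule ext, rule trans[OF finsum_cong'[of _ _ "\<lambda>j. \<zero>"]]) (use nth_vecs[OF assms] in auto)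

end

context field
begin

lemma eq_of_diff: "a \<in> carrier R \<Longrightarrow> b \<in> carrier R \<Longrightarrow> a \<oplus> \<ominus> \<one> \<otimes> b = \<zero> \<Longrightarrow> a = b"
proof -
  assume a: "a \<in> carrier R" "b \<in> carrier R" "a \<oplus> \<ominus> \<one> \<otimes> b = \<zero>"
  have "\<ominus> \<one> \<otimes> b = \<ominus> b" using a l_minus by simp
  then have "a \<oplus> \<ominus> b = \<zero>" using a by simp
  then have "(a \<oplus> \<ominus> b) \<oplus> b = b" using a by simp
  then show "a = b" using a by (simp add: a_assoc l_neg)
qed

lemma spn_vecs: "set vs \<subseteq> vecs R N \<Longrightarrow> spn R vs \<subseteq> vecs R N"
  unfolding spn_def using lincomb_vecs by blast

lemma vzero_spn: "set vs \<subseteq> vecs R N \<Longrightarrow> vzero R \<in> spn R vs"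
  unfolding spn_def using lincomb_zero_coeff[of vs N] by force

lemma spn_smult: "set vs \<subseteq> vecs R N \<Longrightarrow> a \<in> carrier R \<Longrightarrow> v \<in> spn R vs \<Longrightarrow> vsmult R a v \<in> spn R vs"
proof -
  assume a: "set vs \<subseteq> vecs R N" "a \<in> carrier R" "v \<in> spn R vs"
  then obtain c where c: "v = lincomb R c vs" "\<forall>j<length vs. c j \<in> carrier R" unfolding spn_def by auto
  then have "vsmult R a v = lincomb R (\<lambda>j. a \<otimes> c j) vs" using lincomb_smult a by auto
  then show ?thesis unfolding spn_def using c a by auto
qed

lemma spn_add: "set vs \<subseteq> vecs R N \<Longrightarrow> v \<in> spn R vs \<Longrightarrow> w \<in> spn R vs \<Longrightarrow> vadd R v w \<in> spn R vs"
proof -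
  assume a: "set vs \<subseteq> vecs R N" "v \<in> spn R vs" "w \<in> spn R vs"
  then obtain c where c: "v = lincomb R c vs" "\<forall>j<length vs. c j \<in> carrier R" unfolding spn_def by auto
  obtain d where d: "w = lincomb R d vs" "\<forall>j<length vs. d j \<in> carrier R" using a unfolding spn_def by auto
  have "vadd R v w = lincomb R (\<lambda>j. c j \<oplus> d j) vs" using lincomb_add c d a by auto
  then show ?thesis unfolding spn_def using c d by auto
qed

lemma lsubspace_spn: "set vs \<subseteq> vecs R N \<Longrightarrow> lsubspace R N (spn R vs)"
  unfolding lsubspace_def using spn_vecs vzero_spn spn_add spn_smult by blast

lemma lsub_vecs: "lsubspace R N W \<Longrightarrow> W \<subseteq> vecs R N"
  unfolding lsubspace_def by auto

lemma lincomb_in_lsub: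
  assumes "lsubspace R N W"
  shows "set vs \<subseteq> W \<Longrightarrow> \<forall>j<length vs. c j \<in> carrier R \<Longrightarrow> lincomb R c vs \<in> W"
proof (induction vs rule: rev_induct)
  case Nil
  then show ?case using assms unfolding lsubspace_def by (simp add: lincomb_Nil)
next
  case (snoc x xs)
  have W: "W \<subseteq> vecs R N" using assms lsub_vecs by auto
  have "lincomb R c (xs @ [x]) = vadd R (lincomb R c xs) (vsmult R (c (length xs)) x)"
    using snoc.prems W by (intro lincomb_snoc) auto
  moreover have "lincomb R c xs \<in> W" using snoc by auto
  moreover have "vsmult R (c (length xs)) x \<in> W" using snoc.prems assms unfolding lsubspace_def by auto
  ultimately show ?case using assms unfolding lsubspace_def by auto
qed

lemma spn_subset: "lsubspace R N W \<Longrightarrow> set vs \<subseteq> W \<Longrightarrow> spn R vs \<subseteq> W"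
  unfolding spn_def using lincomb_in_lsub by blast

lemma spn_image: "set vs \<subseteq> vecs R N \<Longrightarrow>
   spn R vs = (\<lambda>c. lincomb R c vs) ` (PiE {..<length vs} (\<lambda>_. carrier R))"
proof
  assume a: "set vs \<subseteq> vecs R N"
  show "spn R vs \<subseteq> (\<lambda>c. lincomb R c vs) ` (PiE {..<length vs} (\<lambda>_. carrier R))"
  proof
    fix v assume "v \<in> spn R vs"
    then obtain c where c: "v = lincomb R c vs" "\<forall>j<length vs. c j \<in> carrier R" unfolding spn_def by auto
    have "v = lincomb R (restrict c {..<length vs}) vs" using c a by (auto intro!: lincomb_cong)
    moreover have "restrict c {..<length vs} \<in> PiE {..<length vs} (\<lambda>_. carrier R)" using c by auto
    ultimately show "v \<in> (\<lambda>c. lincomb R c vs) ` (PiE {..<length vs} (\<lambda>_. carrier R))" by blast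
  qed
next
  show "(\<lambda>c. lincomb R c vs) ` (PiE {..<length vs} (\<lambda>_. carrier R)) \<subseteq> spn R vs"
    unfolding spn_def by (auto simp: PiE_def Pi_def)
qed

lemma card_PiE_const: "card (PiE {..<m} (\<lambda>_. carrier R)) = card (carrier R) ^ m"
  by (simp add: card_PiE)

lemma finite_spn: "finite (carrier R) \<Longrightarrow> set vs \<subseteq> vecs R N \<Longrightarrow> finite (spn R vs)"
  using spn_image by (simp add: finite_PiE)

lemma card_spn_le: "finite (carrier R) \<Longrightarrow> set vs \<subseteq> vecs R N \<Longrightarrow> card (spn R vs) \<le> card (carrier R) ^ length vs"
proof -
  assume a: "finite (carrier R)" "set vs \<subseteq> vecs R N"
  have "card (spn R vs) \<le> card (PiE {..<length vs} (\<lambda>_. carrier R))"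
    unfolding spn_image[OF a(2)] using a(1) by (intro card_image_le) (simp add: finite_PiE)
  then show ?thesis by (simp add: card_PiE_const)
qed

lemma lincomb_eq_indep:
  assumes "lin_indep R vs" "set vs \<subseteq> vecs R N" "\<forall>j<length vs. c j \<in> carrier R" "\<forall>j<length vs. d j \<in> carrier R"
    "lincomb R c vs = lincomb R d vs" "j < length vs"
  shows "c j = d j"
proof -
  have dd: "\<forall>j<length vs. \<ominus> \<one> \<otimes> d j \<in> carrier R" using assms(4) by auto
  have s: "lincomb R (\<lambda>j. \<ominus> \<one> \<otimes> d j) vs = vsmult R (\<ominus> \<one>) (lincomb R d vs)"
    by (rule lincomb_smult[OF assms(4) _ assms(2)]) simp
  have z: "vadd R (lincomb R c vs) (vsmult R (\<ominus> \<one>) (lincomb R d vs)) = vzero R"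
  proof (rule ext)
    fix i
    have L: "lincomb R d vs i \<in> carrier R" by (rule lincomb_coord[OF assms(4,2)])
    have "lincomb R d vs i \<oplus> \<ominus> \<one> \<otimes> lincomb R d vs i = \<zero>" using L by algebra
    then show "vadd R (lincomb R c vs) (vsmult R (\<ominus> \<one>) (lincomb R d vs)) i = vzero R i"
      unfolding vadd_def vsmult_def vzero_def assms(5) .
  qed
  have "lincomb R (\<lambda>j. c j \<oplus> \<ominus> \<one> \<otimes> d j) vs = vzero R"
    unfolding lincomb_add[OF assms(3) dd assms(2)] s z ..
  then have "\<forall>j<length vs. c j \<oplus> \<ominus> \<one> \<otimes> d j = \<zero>"
    using assms(1)[unfolded lin_indep_def, rule_format, of "\<lambda>j. c j \<oplus> \<ominus> \<one> \<otimes> d j"] dd assms(3) by blast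
  then show ?thesis using eq_of_diff assms(3,4,6) by blast
qed

lemma card_spn_indep:
  assumes "finite (carrier R)" "set vs \<subseteq> vecs R N" "lin_indep R vs"
  shows "card (spn R vs) = card (carrier R) ^ length vs"
proof -
  have "inj_on (\<lambda>c. lincomb R c vs) (PiE {..<length vs} (\<lambda>_. carrier R))"
  proof (rule inj_onI)
    fix c d assume cd: "c \<in> PiE {..<length vs} (\<lambda>_. carrier R)" "d \<in> PiE {..<length vs} (\<lambda>_. carrier R)"
      "lincomb R c vs = lincomb R d vs"
    show "c = d"
      by (rule PiE_ext[OF cd(1,2)]) (use cd assms in \<open>auto intro!: lincomb_eq_indep simp: PiE_def Pi_def\<close>)
  qed
  then have "card (spn R vs) = card (PiE {..<length vs} (\<lambda>_. carrier R))"
    unfolding spn_image[OF assms(2)] by (rule card_image)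
  then show ?thesis by (simp add: card_PiE_const)
qed

lemma spn_eq_full:
  assumes "finite (carrier R)" "set bs \<subseteq> vecs R N" "lin_indep R bs"
    "set vs \<subseteq> spn R bs" "lin_indep R vs" "length vs = length bs"
  shows "spn R vs = spn R bs"
proof -
  have vs: "set vs \<subseteq> vecs R N" using assms spn_vecs by blast
  have sub: "spn R vs \<subseteq> spn R bs" using spn_subset[OF lsubspace_spn[OF assms(2)] assms(4)] .
  show ?thesis
    by (rule card_subset_eq[OF finite_spn[OF assms(1,2)] sub])
      (simp add: card_spn_indep[OF assms(1) vs assms(5)] card_spn_indep[OF assms(1-3)] assms(6))
qed

lemma indep_snoc:
  assumes "lin_indep R vs" "set vs \<subseteq> vecs R N" "x \<in> vecs R N" "x \<notin> spn R vs"
  shows "lin_indep R (vs @ [x])"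
  unfolding lin_indep_def
proof (rule allI, rule impI)
  fix c assume h: "(\<forall>j<length (vs @ [x]). c j \<in> carrier R) \<and> lincomb R c (vs @ [x]) = vzero R"
  let ?a = "c (length vs)"
  have c: "\<forall>j<length vs. c j \<in> carrier R" and a: "?a \<in> carrier R" using h by auto
  have eq: "vadd R (lincomb R c vs) (vsmult R ?a x) = vzero R"
    using h lincomb_snoc[of vs c N x] assms by auto
  have a0: "?a = \<zero>"
  proof (rule ccontr)
    assume an: "?a \<noteq> \<zero>"
    then have ia: "inv ?a \<in> carrier R" "inv ?a \<otimes> ?a = \<one>" using a field_Units by auto
    have "x = vsmult R (\<ominus> (inv ?a)) (lincomb R c vs)"
    proof (rule ext)
      fix i
      have L: "lincomb R c vs i \<in> carrier R" using lincomb_coord[OF c assms(2)] .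
      have xi: "x i \<in> carrier R" using vecs_coord assms(3) by auto
      have e: "lincomb R c vs i \<oplus> ?a \<otimes> x i = \<zero>" using fun_cong[OF eq, of i] unfolding vadd_def vsmult_def vzero_def .
      then have "?a \<otimes> x i = \<ominus> lincomb R c vs i" using L xi a
        by (metis add.inv_closed add.m_comm m_closed minus_equality)
      then have "inv ?a \<otimes> (?a \<otimes> x i) = \<ominus> (inv ?a) \<otimes> lincomb R c vs i"
        using ia L by (simp add: r_minus l_minus)
      then show "x i = vsmult R (\<ominus> (inv ?a)) (lincomb R c vs) i"
        unfolding vsmult_def using ia xi a by (simp add: m_assoc[symmetric])
    qed
    also have "\<dots> \<in> spn R vs" using spn_smult[OF assms(2)] ia c unfolding spn_def by blast
    finally show False using assms(4) by auto
  qed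
  have "lincomb R c vs = vzero R"
  proof (rule ext)
    fix i
    show "lincomb R c vs i = vzero R i"
      using fun_cong[OF eq, of i] a0 lincomb_coord[OF c assms(2)] vecs_coord[OF assms(3)]
      unfolding vadd_def vsmult_def vzero_def by simp
  qed
  then have "\<forall>j<length vs. c j = \<zero>" using assms(1) c unfolding lin_indep_def by auto
  then show "\<forall>j<length (vs @ [x]). c j = \<zero>" using a0 by (auto simp: less_Suc_eq)
qed

end

context field
begin

lemma scl_length[simp]: "length (scl R c vs) = length vs"
  unfolding scl_def by simp

lemma scl_nth[simp]: "k < length vs \<Longrightarrow> scl R c vs ! k = vsmult R (c k) (vs!k)"
  unfolding scl_def by simp

lemma smult_vecs: "a \<in> carrier R \<Longrightarrow> v \<in> vecs R N \<Longrightarrow> vsmult R a v \<in> vecs R N"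
  unfolding vsmult_def by (rule vecsI) (auto simp: vecs_coord vecs_high[of v N])

lemma add_vecs: "v \<in> vecs R N \<Longrightarrow> w \<in> vecs R N \<Longrightarrow> vadd R v w \<in> vecs R N"
  unfolding vadd_def by (rule vecsI) (auto simp: vecs_coord vecs_high[of v N] vecs_high[of w N])

lemma scl_vecs:
  assumes "\<forall>j<length vs. c j \<in> carrier R" "set vs \<subseteq> vecs R N"
  shows "set (scl R c vs) \<subseteq> vecs R N"
proof
  fix y assume "y \<in> set (scl R c vs)"
  then obtain k where k: "k < length vs" "y = vsmult R (c k) (vs!k)" by (auto simp: in_set_conv_nth)
  have "vs!k \<in> vecs R N" using k(1) assms(2) nth_mem by blast
  then show "y \<in> vecs R N" using smult_vecs k assms(1) by auto
qed

lemma lincomb_scl: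
  assumes "\<forall>j<length vs. e j \<in> carrier R" "\<forall>j<length vs. c j \<in> carrier R" "set vs \<subseteq> vecs R N"
  shows "lincomb R e (scl R c vs) = lincomb R (\<lambda>j. e j \<otimes> c j) vs"
proof (rule ext)
  fix i
  have ec: "\<forall>j<length vs. e j \<otimes> c j \<in> carrier R" using assms by auto
  show "lincomb R e (scl R c vs) i = lincomb R (\<lambda>j. e j \<otimes> c j) vs i"
    unfolding lincomb_def scl_length
  proof (rule finsum_cong')
    show "(\<lambda>j. (e j \<otimes> c j) \<otimes> (vs!j) i) \<in> {..<length vs} \<rightarrow> carrier R"
      using lincomb_Pi[OF ec assms(3)] .
    fix j assume j: "j \<in> {..<length vs}"
    then have "(vs!j) i \<in> carrier R" "e j \<in> carrier R" "c j \<in> carrier R"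
      using nth_vecs[OF assms(3)] assms by auto
    then show "e j \<otimes> (scl R c vs ! j) i = (e j \<otimes> c j) \<otimes> (vs!j) i"
      using j by (simp add: vsmult_def m_assoc)
  qed simp
qed

lemma indep_scl:
  assumes "lin_indep R vs" "set vs \<subseteq> vecs R N" "\<forall>j<length vs. c j \<in> carrier R - {\<zero>}"
  shows "lin_indep R (scl R c vs)"
  unfolding lin_indep_def
proof (rule allI, rule impI)
  fix e assume h: "(\<forall>j<length (scl R c vs). e j \<in> carrier R) \<and> lincomb R e (scl R c vs) = vzero R"
  have e: "\<forall>j<length vs. e j \<in> carrier R" using h by simp
  have c: "\<forall>j<length vs. c j \<in> carrier R" using assms(3) by blast
  have ec: "\<forall>j<length vs. e j \<otimes> c j \<in> carrier R" using e c by blast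
  have "lincomb R (\<lambda>j. e j \<otimes> c j) vs = vzero R" using h lincomb_scl[OF e c assms(2)] by simp
  then have z: "\<forall>j<length vs. e j \<otimes> c j = \<zero>"
    using assms(1)[unfolded lin_indep_def, rule_format, of "\<lambda>j. e j \<otimes> c j"] ec by blast
  show "\<forall>j<length (scl R c vs). e j = \<zero>"
  proof (intro allI impI)
    fix j assume "j < length (scl R c vs)"
    then have j: "j < length vs" by simp
    have "e j = \<zero> \<or> c j = \<zero>" using z j e c integral_iff by blast
    then show "e j = \<zero>" using assms(3) j by blast
  qed
qed

lemma spn_scl_sub:
  assumes "set vs \<subseteq> vecs R N" "\<forall>j<length vs. c j \<in> carrier R"
  shows "spn R (scl R c vs) \<subseteq> spn R vs"
proof
  fix v assume "v \<in> spn R (scl R c vs)"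
  then obtain e where e: "v = lincomb R e (scl R c vs)" "\<forall>j<length vs. e j \<in> carrier R"
    unfolding spn_def by auto
  then have "v = lincomb R (\<lambda>j. e j \<otimes> c j) vs" using lincomb_scl[OF e(2) assms(2,1)] by simp
  moreover have "\<forall>j<length vs. e j \<otimes> c j \<in> carrier R" using e(2) assms(2) by blast
  ultimately show "v \<in> spn R vs" unfolding spn_def by blast
qed

lemma spn_scl:
  assumes "finite (carrier R)" "lin_indep R vs" "set vs \<subseteq> vecs R N" "\<forall>j<length vs. c j \<in> carrier R - {\<zero>}"
  shows "spn R (scl R c vs) = spn R vs"
proof -
  have c: "\<forall>j<length vs. c j \<in> carrier R" using assms by auto
  show ?thesis
    by (rule card_subset_eq[OF finite_spn[OF assms(1,3)] spn_scl_sub[OF assms(3) c]])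
      (simp add: card_spn_indep[OF assms(1) scl_vecs[OF c assms(3)] indep_scl[OF assms(2-4)]]
        card_spn_indep[OF assms(1,3,2)])
qed

lemma smult_one: "v \<in> vecs R N \<Longrightarrow> vsmult R \<one> v = v"
  unfolding vsmult_def using vecs_coord[of v N] by (intro ext) simp

lemma scl_append:
  assumes "set w \<subseteq> vecs R N"
  shows "scl R (\<lambda>k. if k < length vs then c k else \<one>) (vs @ w) = scl R c vs @ w"
proof (rule nth_equalityI)
  show "length (scl R (\<lambda>k. if k < length vs then c k else \<one>) (vs @ w)) = length (scl R c vs @ w)" by simp
next
  fix k assume "k < length (scl R (\<lambda>k. if k < length vs then c k else \<one>) (vs @ w))"
  then have k: "k < length vs + length w" by simp
  show "scl R (\<lambda>k. if k < length vs then c k else \<one>) (vs @ w) ! k = (scl R c vs @ w) ! k"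
  proof (cases "k < length vs")
    case True then show ?thesis using k by (simp add: nth_append)
  next
    case False
    then have "w ! (k - length vs) \<in> vecs R N" using k assms by auto
    then show ?thesis using k False by (simp add: nth_append smult_one)
  qed
qed

lemma smult_cancel:
  assumes "v \<in> vecs R N" "v \<noteq> vzero R" "a \<in> carrier R" "b \<in> carrier R" "vsmult R a v = vsmult R b v"
  shows "a = b"
proof -
  obtain i where i: "v i \<noteq> \<zero>" using assms(2) unfolding vzero_def by auto
  have "a \<otimes> v i = b \<otimes> v i" using fun_cong[OF assms(5), of i] unfolding vsmult_def .
  then show ?thesis using m_rcancel[OF i vecs_coord[OF assms(1)] assms(3,4)] by simp
qed

lemma vecs_image: "vecs R N = (\<lambda>f i. if i < N then f i else \<zero>) ` (PiE {..<N} (\<lambda>_. carrier R))"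
proof
  show "vecs R N \<subseteq> (\<lambda>f i. if i < N then f i else \<zero>) ` (PiE {..<N} (\<lambda>_. carrier R))"
  proof
    fix v assume v: "v \<in> vecs R N"
    have "v = (\<lambda>i. if i < N then restrict v {..<N} i else \<zero>)"
    proof (rule ext)
      fix i show "v i = (if i < N then restrict v {..<N} i else \<zero>)"
        using vecs_high[OF v, of i] by (cases "i < N") auto
    qed
    moreover have "restrict v {..<N} \<in> PiE {..<N} (\<lambda>_. carrier R)" using vecs_coord[OF v] by auto
    ultimately show "v \<in> (\<lambda>f i. if i < N then f i else \<zero>) ` (PiE {..<N} (\<lambda>_. carrier R))" by blast
  qed
next
  show "(\<lambda>f i. if i < N then f i else \<zero>) ` (PiE {..<N} (\<lambda>_. carrier R)) \<subseteq> vecs R N"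
  proof
    fix v assume "v \<in> (\<lambda>f i. if i < N then f i else \<zero>) ` (PiE {..<N} (\<lambda>_. carrier R))"
    then obtain f where f: "f \<in> PiE {..<N} (\<lambda>_. carrier R)" "v = (\<lambda>i. if i < N then f i else \<zero>)" by blast
    show "v \<in> vecs R N"
    proof (rule vecsI)
      fix i assume "i < N" then show "v i \<in> carrier R" using f by auto
    next
      fix i assume "N \<le> i" then show "v i = \<zero>" using f by auto
    qed
  qed
qed

lemma finite_vecs: "finite (carrier R) \<Longrightarrow> finite (vecs R N)"
  using vecs_image by (simp add: finite_PiE)

lemma card_vecs_le: "finite (carrier R) \<Longrightarrow> card (vecs R N) \<le> card (carrier R) ^ N"
proof -
  assume a: "finite (carrier R)"
  have "card (vecs R N) \<le> card (PiE {..<N} (\<lambda>_. carrier R))"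
    unfolding vecs_image[of N] using a by (intro card_image_le) (simp add: finite_PiE)
  then show ?thesis by (simp add: card_PiE_const)
qed

lemma solve_lin:
  assumes "a \<in> carrier R" "a \<noteq> \<zero>" "u \<in> carrier R" "x \<in> carrier R"
  shows "x = (\<ominus> (inv a) \<otimes> u) \<oplus> inv a \<otimes> (u \<oplus> a \<otimes> x)"
proof -
  have ia: "inv a \<in> carrier R" "inv a \<otimes> a = \<one>" using assms field_Units by auto
  have "inv a \<otimes> (u \<oplus> a \<otimes> x) = inv a \<otimes> u \<oplus> x"
    using ia assms by (simp add: r_distr m_assoc[symmetric])
  then show ?thesis using ia assms by (simp add: l_minus a_assoc[symmetric] l_neg)
qed

lemma diff_cancel_vec:
  assumes "u \<in> carrier R" "a \<in> carrier R" "b \<in> carrier R"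
  shows "(u \<oplus> a) \<oplus> \<ominus> \<one> \<otimes> (u \<oplus> b) = a \<oplus> \<ominus> \<one> \<otimes> b"
  using assms by algebra

end

definition Gset :: "('a,'m) ring_scheme \<Rightarrow> (nat \<Rightarrow> (nat \<Rightarrow> 'a) set) \<Rightarrow> nat list \<Rightarrow> nat set \<Rightarrow> (nat \<Rightarrow> 'a) list set" where
  "Gset R A js I = {vs. length vs = length js \<and> (\<forall>k<length js. vs!k \<in> A (js!k)) \<and> (\<forall>i\<in>I. meets R (spn R vs) (A i))}"

definition Xs :: "('a,'m) ring_scheme \<Rightarrow> (nat \<Rightarrow> 'a) set \<Rightarrow> (nat \<Rightarrow> 'a) set \<Rightarrow> (nat \<Rightarrow> 'a) list \<Rightarrow> (nat \<Rightarrow> 'a) set" where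
  "Xs R Aj Ai vs = {x \<in> Aj. \<exists>u\<in>spn R vs. \<exists>a\<in>Ai. x = vadd R u a}"

context field
begin

lemma Xs_card:
  assumes fin: "finite (carrier R)" and Aj: "lsubspace R N Aj" and Ai: "lsubspace R N Ai"
    and sk: "Aj \<inter> Ai = {vzero R}" and vs: "set vs \<subseteq> vecs R N"
  shows "card (Xs R Aj Ai vs) \<le> card (carrier R) ^ length vs"
proof -
  let ?X = "Xs R Aj Ai vs"
  let ?f = "\<lambda>x. SOME u. u \<in> spn R vs \<and> (\<exists>a\<in>Ai. x = vadd R u a)"
  have fx: "?f x \<in> spn R vs \<and> (\<exists>a\<in>Ai. x = vadd R (?f x) a)" if "x \<in> ?X" for x
  proof -
    have "\<exists>u. u \<in> spn R vs \<and> (\<exists>a\<in>Ai. x = vadd R u a)" using that unfolding Xs_def by blast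
    then show ?thesis by (rule someI_ex)
  qed
  have Aiv: "Ai \<subseteq> vecs R N" and Ajv: "Aj \<subseteq> vecs R N" using Ai Aj lsub_vecs by auto
  have "inj_on ?f ?X"
  proof (rule inj_onI)
    fix x y assume x: "x \<in> ?X" and y: "y \<in> ?X" and fxy: "?f x = ?f y"
    define u where "u = ?f x"
    have uS: "u \<in> spn R vs" using fx[OF x] unfolding u_def by blast
    obtain a where a: "a \<in> Ai" "x = vadd R u a" using fx[OF x] unfolding u_def by blast
    have fyu: "?f y = u" using fxy unfolding u_def by simp
    obtain b where b0: "b \<in> Ai" "y = vadd R (?f y) b" using fx[OF y] by blast
    have b: "b \<in> Ai" "y = vadd R u b" using b0 unfolding fyu by blast+
    have u: "u \<in> vecs R N" using uS spn_vecs[OF vs] by blast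
    have aN: "a \<in> vecs R N" and bN: "b \<in> vecs R N" using a(1) b(1) Aiv by blast+
    have xA: "x \<in> Aj" and yA: "y \<in> Aj" using x y unfolding Xs_def by blast+
    have xN: "x \<in> vecs R N" and yN: "y \<in> vecs R N" using xA yA Ajv by blast+
    let ?z = "vadd R x (vsmult R (\<ominus> \<one>) y)"
    have z1: "?z \<in> Aj" using Aj xA yA unfolding lsubspace_def by simp
    have "?z = vadd R a (vsmult R (\<ominus> \<one>) b)"
    proof (rule ext)
      fix k
      have "?z k = (u k \<oplus> a k) \<oplus> \<ominus> \<one> \<otimes> (u k \<oplus> b k)"
        unfolding vadd_def vsmult_def a(2) b(2) ..
      also have "\<dots> = a k \<oplus> \<ominus> \<one> \<otimes> b k"
        by (rule diff_cancel_vec[OF vecs_coord[OF u] vecs_coord[OF aN] vecs_coord[OF bN]])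
      finally show "?z k = vadd R a (vsmult R (\<ominus> \<one>) b) k" unfolding vadd_def vsmult_def .
    qed
    also have "\<dots> \<in> Ai" using Ai a(1) b(1) unfolding lsubspace_def by simp
    finally have "?z \<in> Ai" .
    then have zz: "?z = vzero R" using z1 sk by blast
    show "x = y"
    proof (rule ext)
      fix k
      have "x k \<oplus> \<ominus> \<one> \<otimes> y k = \<zero>"
        using fun_cong[OF zz, of k] unfolding vadd_def vsmult_def vzero_def .
      then show "x k = y k" using eq_of_diff[OF vecs_coord[OF xN] vecs_coord[OF yN]] by blast
    qed
  qed
  moreover have "?f ` ?X \<subseteq> spn R vs" using fx by auto
  ultimately have "card ?X \<le> card (spn R vs)" using card_inj_on_le finite_spn[OF fin vs] by blast
  then show ?thesis using card_spn_le[OF fin vs] by linarith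
qed

end

context field
begin

lemma Gset_cover:
  assumes As: "\<forall>j'\<in>set (js@[j]). lsubspace R N (A j')" and Ai: "\<forall>i\<in>I. lsubspace R N (A i)"
  shows "Gset R A (js@[j]) I \<subseteq> (\<Union>I1\<in>Pow I. (if I1 = I then (\<lambda>(vs,x). vs@[x]) ` (Gset R A js I \<times> A j) else {})
          \<union> (\<Union>i\<in>I-I1. (\<lambda>(vs,x). vs@[x]) ` (SIGMA vs:Gset R A js I1. Xs R (A j) (A i) vs)))"
proof
  fix v assume v: "v \<in> Gset R A (js@[j]) I"
  have lv: "length v = Suc (length js)" using v unfolding Gset_def by auto
  then have vne: "v \<noteq> []" by auto
  define vs where "vs = butlast v"
  define x where "x = last v"
  have vdec: "v = vs @ [x]" unfolding vs_def x_def using vne by simp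
  have lvs: "length vs = length js" using lv unfolding vs_def by simp
  have vsk: "\<forall>k<length js. vs!k \<in> A (js!k)"
  proof (intro allI impI)
    fix k assume k: "k < length js"
    have "v!k \<in> A ((js@[j])!k)" using v k unfolding Gset_def by auto
    then show "vs!k \<in> A (js!k)" using k lvs vdec by (simp add: nth_append)
  qed
  have xA: "x \<in> A j"
  proof -
    have "v!(length js) \<in> A ((js@[j])!(length js))" using v unfolding Gset_def by auto
    then show ?thesis using vdec lvs by (simp add: nth_append)
  qed
  have vsvecs: "set vs \<subseteq> vecs R N"
  proof
    fix y assume "y \<in> set vs"
    then obtain k where k: "k < length vs" "y = vs!k" by (auto simp: in_set_conv_nth)
    then have "y \<in> A (js!k)" using vsk lvs by auto
    moreover have "js!k \<in> set (js@[j])" using k lvs by auto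
    ultimately show "y \<in> vecs R N" using As lsub_vecs by blast
  qed
  have xvecs: "x \<in> vecs R N" using xA As lsub_vecs by auto
  define I1 where "I1 = {i\<in>I. meets R (spn R vs) (A i)}"
  have I1: "I1 \<in> Pow I" unfolding I1_def by auto
  have vsG1: "vs \<in> Gset R A js I1" unfolding Gset_def I1_def using lvs vsk by auto
  show "v \<in> (\<Union>I1\<in>Pow I. (if I1 = I then (\<lambda>(vs,x). vs@[x]) ` (Gset R A js I \<times> A j) else {})
          \<union> (\<Union>i\<in>I-I1. (\<lambda>(vs,x). vs@[x]) ` (SIGMA vs:Gset R A js I1. Xs R (A j) (A i) vs)))"
  proof (cases "I1 = I")
    case True
    then have "v \<in> (\<lambda>(vs,x). vs@[x]) ` (Gset R A js I \<times> A j)"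
      using vsG1 xA unfolding vdec by (intro image_eqI[of _ _ "(vs,x)"]) auto
    then have "v \<in> (if I1 = I then (\<lambda>(vs,x). vs@[x]) ` (Gset R A js I \<times> A j) else {})
          \<union> (\<Union>i\<in>I-I1. (\<lambda>(vs,x). vs@[x]) ` (SIGMA vs:Gset R A js I1. Xs R (A j) (A i) vs))"
      using True by (intro UnI1) simp
    then show ?thesis by (rule UN_I[OF I1])
  next
    case False
    then obtain i where i: "i \<in> I" "i \<notin> I1" using I1 by auto
    then have nm: "\<not> meets R (spn R vs) (A i)" unfolding I1_def by auto
    have "meets R (spn R v) (A i)" using v i unfolding Gset_def by auto
    then obtain w where w: "w \<in> spn R (vs@[x])" "w \<in> A i" "w \<noteq> vzero R" unfolding meets_def vdec by auto
    then obtain e where e: "w = lincomb R e (vs@[x])" "\<forall>j<length (vs@[x]). e j \<in> carrier R"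
      unfolding spn_def by auto
    have ec: "\<forall>j<Suc (length vs). e j \<in> carrier R" using e by auto
    have ecv: "\<forall>j<length vs. e j \<in> carrier R" using e by auto
    let ?a = "e (length vs)"
    let ?u = "lincomb R e vs"
    have a: "?a \<in> carrier R" using e by auto
    have weq: "w = vadd R ?u (vsmult R ?a x)"
      using e(1) lincomb_snoc[OF ec vsvecs xvecs] by simp
    have uv: "?u \<in> spn R vs" unfolding spn_def using ecv by auto
    have uvec: "?u \<in> vecs R N" using uv spn_vecs[OF vsvecs] by auto
    have a0: "?a \<noteq> \<zero>"
    proof
      assume a0: "?a = \<zero>"
      have "w = ?u"
      proof (rule ext)
        fix k show "w k = ?u k" using weq a0 vecs_coord[OF uvec] vecs_coord[OF xvecs]
          unfolding vadd_def vsmult_def by simp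
      qed
      then have "meets R (spn R vs) (A i)" using w uv unfolding meets_def by auto
      then show False using nm by auto
    qed
    have ia0: "inv ?a \<in> carrier R" using a a0 field_Units by (simp add: Units_inv_closed)
    have ia: "inv ?a \<in> carrier R" "\<ominus> (inv ?a) \<in> carrier R" using ia0 by simp_all
    have xeq: "x = vadd R (vsmult R (\<ominus> (inv ?a)) ?u) (vsmult R (inv ?a) w)"
    proof (rule ext)
      fix k
      show "x k = vadd R (vsmult R (\<ominus> (inv ?a)) ?u) (vsmult R (inv ?a) w) k"
        unfolding weq vadd_def vsmult_def
        by (rule solve_lin[OF a a0 vecs_coord[OF uvec] vecs_coord[OF xvecs]])
    qed
    have "vsmult R (\<ominus> (inv ?a)) ?u \<in> spn R vs" using spn_smult[OF vsvecs ia(2) uv] .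
    moreover have "vsmult R (inv ?a) w \<in> A i" using Ai i w ia unfolding lsubspace_def by auto
    ultimately have "x \<in> Xs R (A j) (A i) vs" unfolding Xs_def using xA xeq by blast
    then have "v \<in> (\<lambda>(vs,x). vs@[x]) ` (SIGMA vs:Gset R A js I1. Xs R (A j) (A i) vs)"
      using vsG1 unfolding vdec by (intro image_eqI[of _ _ "(vs,x)"]) auto
    then have "v \<in> (\<Union>i\<in>I-I1. (\<lambda>(vs,x). vs@[x]) ` (SIGMA vs:Gset R A js I1. Xs R (A j) (A i) vs))"
      using i by (intro UN_I[of i]) simp_all
    then have "v \<in> (if I1 = I then (\<lambda>(vs,x). vs@[x]) ` (Gset R A js I \<times> A j) else {})
          \<union> (\<Union>i\<in>I-I1. (\<lambda>(vs,x). vs@[x]) ` (SIGMA vs:Gset R A js I1. Xs R (A j) (A i) vs))"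
      by (rule UnI2)
    then show ?thesis by (rule UN_I[OF I1])
  qed
qed

end

context field
begin

lemma Gset_finite:
  assumes fin: "finite (carrier R)" and As: "\<forall>j\<in>set js. A j \<subseteq> vecs R N"
  shows "finite (Gset R A js I)"
proof -
  have "Gset R A js I \<subseteq> {xs. set xs \<subseteq> vecs R N \<and> length xs = length js}"
  proof
    fix v assume v: "v \<in> Gset R A js I"
    have "set v \<subseteq> vecs R N"
    proof
      fix y assume "y \<in> set v"
      then obtain k where k: "k < length v" "y = v!k" by (auto simp: in_set_conv_nth)
      have "v!k \<in> A (js!k)" "js!k \<in> set js" using v k unfolding Gset_def by auto
      then show "y \<in> vecs R N" using As k by blast
    qed
    then show "v \<in> {xs. set xs \<subseteq> vecs R N \<and> length xs = length js}" using v unfolding Gset_def by auto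
  qed
  then show ?thesis using finite_lists_length_eq[OF finite_vecs[OF fin]] finite_subset by blast
qed

lemma Gset_Nil: "Gset R A [] I \<subseteq> (if I = {} then {[]} else {})"
proof
  fix v assume v: "v \<in> Gset R A [] I"
  then have "v = []" unfolding Gset_def by auto
  moreover have "I = {}"
  proof (rule ccontr)
    assume "I \<noteq> {}"
    then obtain i where "i \<in> I" by auto
    then have "meets R (spn R []) (A i)" using v \<open>v = []\<close> unfolding Gset_def by auto
    then show False unfolding meets_def spn_def by (auto simp: lincomb_Nil)
  qed
  ultimately show "v \<in> (if I = {} then {[]} else {})" by simp
qed

lemma G_bound:
  assumes fin: "finite (carrier R)"
  shows "\<lbrakk>\<forall>j\<in>set js. lsubspace R N (A j) \<and> card (A j) \<le> card (carrier R) ^ m;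
          \<forall>i\<in>I. lsubspace R N (A i); \<forall>j\<in>set js. \<forall>i\<in>I. A j \<inter> A i = {vzero R};
          finite I; length js + card I \<le> m + 1\<rbrakk> \<Longrightarrow>
   card (Gset R A js I) * card (carrier R) ^ (card I)
     \<le> (2^(m+1)*(m+2)) ^ (length js) * card (carrier R) ^ (length js * m)"
proof (induction js arbitrary: I rule: rev_induct)
  case Nil
  show ?case
  proof (cases "I = {}")
    case True
    then have sub: "Gset R A [] I \<subseteq> {[]}" using Gset_Nil[of A I] by simp
    have "card (Gset R A [] I) \<le> card ({[]} :: (nat \<Rightarrow> 'a) list set)" by (rule Finite_Set.card_mono[OF _ sub]) simp
    then have "card (Gset R A [] I) \<le> 1" by simp
    then show ?thesis using True by simp
  next
    case False
    then have "Gset R A [] I = {}" using Gset_Nil[of A I] by auto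
    then show ?thesis by simp
  qed
next
  case (snoc j js)
  let ?q = "card (carrier R)"
  let ?K = "(2::nat)^(m+1)*(m+2)"
  let ?l = "length js"
  let ?B = "?K ^ ?l * ?q ^ (Suc ?l * m)"
  have q1: "?q \<ge> 1" using fin carrier_not_empty by (simp add: Suc_le_eq card_gt_0_iff)
  have Asv: "\<forall>j'\<in>set (js@[j]). A j' \<subseteq> vecs R N" using snoc.prems lsub_vecs by blast
  have Ajfin: "finite (A j)" using Asv finite_vecs[OF fin] finite_subset by auto
  have IH: "card (Gset R A js I1) * ?q ^ card I1 \<le> ?K ^ ?l * ?q ^ (?l * m)" if "I1 \<subseteq> I" for I1
  proof -
    have "card I1 \<le> card I" using that snoc.prems(4) card_mono by auto
    moreover have "\<forall>j\<in>set js. lsubspace R N (A j) \<and> card (A j) \<le> ?q ^ m" using snoc.prems(1) by simp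
    moreover have "\<forall>i\<in>I1. lsubspace R N (A i)" using snoc.prems(2) that by blast
    moreover have "\<forall>j\<in>set js. \<forall>i\<in>I1. A j \<inter> A i = {vzero R}" using snoc.prems(3) that by (simp add: subset_iff)
    moreover have "finite I1" using finite_subset[OF that snoc.prems(4)] .
    moreover have "length js + card I1 \<le> m + 1" using snoc.prems(5) \<open>card I1 \<le> card I\<close> by simp
    ultimately show ?thesis using snoc.IH[of I1] by blast
  qed
  have Gfin: "finite (Gset R A js I1)" for I1 using Gset_finite[OF fin] Asv by auto
  define P where "P I1 = (if I1 = I then (\<lambda>(vs,x). vs@[x]) ` (Gset R A js I \<times> A j) else {})
          \<union> (\<Union>i\<in>I-I1. (\<lambda>(vs,x). vs@[x]) ` (SIGMA vs:Gset R A js I1. Xs R (A j) (A i) vs))" for I1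
  have As2: "\<forall>j'\<in>set (js@[j]). lsubspace R N (A j')" using snoc.prems(1) by blast
  have cov: "Gset R A (js@[j]) I \<subseteq> (\<Union>I1\<in>Pow I. P I1)"
    unfolding P_def by (rule Gset_cover[OF As2 snoc.prems(2)])
  have Xfin: "finite (Xs R (A j) (A i) vs)" for i vs using Ajfin unfolding Xs_def by auto
  have Pfin: "finite (P I1)" for I1
  proof -
    have f1: "finite ((\<lambda>(vs,x). vs@[x]) ` (Gset R A js I \<times> A j))" using Gfin Ajfin by simp
    have f2: "finite (\<Union>i\<in>I-I1. (\<lambda>(vs,x). vs@[x]) ` (SIGMA vs:Gset R A js I1. Xs R (A j) (A i) vs))"
      using Gfin Xfin snoc.prems(4) by simp
    show ?thesis unfolding P_def using f1 f2 by simp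
  qed
  have T1: "card (if I1 = I then (\<lambda>(vs,x). vs@[x]) ` (Gset R A js I \<times> A j) else {}) * ?q ^ card I \<le> ?B" for I1
  proof (cases "I1 = I")
    case True
    have "card ((\<lambda>(vs,x). vs@[x]) ` (Gset R A js I \<times> A j)) \<le> card (Gset R A js I) * card (A j)"
      using card_image_le[of "Gset R A js I \<times> A j"] Gfin Ajfin by (simp add: card_cartesian_product)
    also have "\<dots> \<le> card (Gset R A js I) * ?q ^ m" using snoc.prems(1) by auto
    finally have "card ((\<lambda>(vs,x). vs@[x]) ` (Gset R A js I \<times> A j)) * ?q ^ card I
        \<le> (card (Gset R A js I) * ?q ^ card I) * ?q ^ m" by (simp add: mult.commute mult.left_commute)
    also have "\<dots> \<le> (?K ^ ?l * ?q ^ (?l * m)) * ?q ^ m" using IH[of I] by simp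
    also have "\<dots> = ?B" by (simp add: power_add algebra_simps)
    finally show ?thesis using True by simp
  qed simp
  have T2: "card ((\<lambda>(vs,x). vs@[x]) ` (SIGMA vs:Gset R A js I1. Xs R (A j) (A i) vs)) * ?q ^ card I \<le> ?B"
    if I1: "I1 \<subseteq> I" and i: "i \<in> I" for I1 i
  proof -
    have "card ((\<lambda>(vs,x). vs@[x]) ` (SIGMA vs:Gset R A js I1. Xs R (A j) (A i) vs))
        \<le> card (SIGMA vs:Gset R A js I1. Xs R (A j) (A i) vs)" using Gfin Xfin by (intro card_image_le) auto
    also have "\<dots> = (\<Sum>vs\<in>Gset R A js I1. card (Xs R (A j) (A i) vs))" using Gfin Xfin by simp
    also have "\<dots> \<le> (\<Sum>vs\<in>Gset R A js I1. ?q ^ ?l)"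
    proof (rule sum_mono)
      fix vs assume vs: "vs \<in> Gset R A js I1"
      have lvs: "length vs = ?l" using vs unfolding Gset_def by auto
      have "set vs \<subseteq> vecs R N"
      proof
        fix y assume "y \<in> set vs"
        then obtain k where k: "k < length vs" "y = vs!k" by (auto simp: in_set_conv_nth)
        have "vs!k \<in> A (js!k)" "js!k \<in> set (js@[j])" using vs k lvs unfolding Gset_def by auto
        then show "y \<in> vecs R N" using Asv k by blast
      qed
      then show "card (Xs R (A j) (A i) vs) \<le> ?q ^ ?l"
        using Xs_card[OF fin, of N "A j" "A i" vs] snoc.prems i lvs by auto
    qed
    also have "\<dots> = card (Gset R A js I1) * ?q ^ ?l" by simp
    finally have c1: "card ((\<lambda>(vs,x). vs@[x]) ` (SIGMA vs:Gset R A js I1. Xs R (A j) (A i) vs))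
        \<le> card (Gset R A js I1) * ?q ^ ?l" .
    have cI: "card I1 \<le> card I" using I1 snoc.prems(4) card_mono by auto
    have le: "?l + (card I - card I1) \<le> m" using snoc.prems(5) by simp
    have "card ((\<lambda>(vs,x). vs@[x]) ` (SIGMA vs:Gset R A js I1. Xs R (A j) (A i) vs)) * ?q ^ card I
        \<le> card (Gset R A js I1) * ?q ^ ?l * ?q ^ card I" using c1 by simp
    also have "\<dots> = (card (Gset R A js I1) * ?q ^ card I1) * ?q ^ (?l + (card I - card I1))"
      using cI by (simp add: power_add[symmetric] algebra_simps)
    also have "\<dots> \<le> (?K ^ ?l * ?q ^ (?l * m)) * ?q ^ m"
      by (rule mult_le_mono[OF IH[OF I1] power_increasing[OF le q1]])
    also have "\<dots> = ?B" by (simp add: power_add algebra_simps)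
    finally show ?thesis .
  qed
  have PB: "card (P I1) * ?q ^ card I \<le> (1 + card I) * ?B" if I1: "I1 \<subseteq> I" for I1
  proof -
    have "card (P I1) \<le> card (if I1 = I then (\<lambda>(vs,x). vs@[x]) ` (Gset R A js I \<times> A j) else {})
        + (\<Sum>i\<in>I-I1. card ((\<lambda>(vs,x). vs@[x]) ` (SIGMA vs:Gset R A js I1. Xs R (A j) (A i) vs)))"
      unfolding P_def
      by (rule order_trans[OF card_Un_le add_left_mono[OF card_UN_le]]) (use snoc.prems(4) in simp)
    then have "card (P I1) * ?q ^ card I \<le> card (if I1 = I then (\<lambda>(vs,x). vs@[x]) ` (Gset R A js I \<times> A j) else {}) * ?q ^ card I
        + (\<Sum>i\<in>I-I1. card ((\<lambda>(vs,x). vs@[x]) ` (SIGMA vs:Gset R A js I1. Xs R (A j) (A i) vs)) * ?q ^ card I)"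
      unfolding sum_distrib_right[symmetric] add_mult_distrib[symmetric] by (rule mult_le_mono1)
    also have "\<dots> \<le> ?B + (\<Sum>i\<in>I-I1. ?B)"
      using T1 T2[OF I1] by (intro add_mono sum_mono) auto
    also have "\<dots> \<le> ?B + card I * ?B"
      using card_mono[OF snoc.prems(4), of "I - I1"] by simp
    finally show ?thesis by simp
  qed
  have "card (Gset R A (js@[j]) I) \<le> card (\<Union>I1\<in>Pow I. P I1)"
    using cov Pfin snoc.prems(4) by (intro card_mono) auto
  also have "\<dots> \<le> (\<Sum>I1\<in>Pow I. card (P I1))" using snoc.prems(4) by (intro card_UN_le) auto
  finally have "card (Gset R A (js@[j]) I) * ?q ^ card I \<le> (\<Sum>I1\<in>Pow I. card (P I1) * ?q ^ card I)"
    unfolding sum_distrib_right[symmetric] by (rule mult_le_mono1)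
  also have "\<dots> \<le> (\<Sum>I1\<in>Pow I. (1 + card I) * ?B)" using PB by (intro sum_mono) auto
  also have "\<dots> = 2 ^ card I * ((1 + card I) * ?B)" using snoc.prems(4) by (simp add: card_Pow)
  also have "\<dots> \<le> 2 ^ (m+1) * ((m + 2) * ?B)"
  proof -
    have cI: "card I \<le> m + 1" using snoc.prems(5) by simp
    have "(2::nat) ^ card I \<le> 2 ^ (m+1)" using cI by (rule power_increasing) simp
    moreover have "(1 + card I) * ?B \<le> (m + 2) * ?B" using cI by (intro mult_le_mono1) simp
    ultimately show ?thesis by (rule mult_le_mono)
  qed
  also have "\<dots> = ?K ^ length (js@[j]) * ?q ^ (length (js@[j]) * m)" by (simp add: algebra_simps)
  finally show ?case .
qed

end

context field
begin

lemma lin_indep_Nil: "lin_indep R []"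
  unfolding lin_indep_def by simp

lemma W_lower:
  assumes fin: "finite (carrier R)" and bs: "set bs \<subseteq> vecs R N" "lin_indep R bs"
    and vs: "set vs \<subseteq> spn R bs" "lin_indep R vs"
  shows "k + length vs \<le> length bs \<Longrightarrow>
    (card (carrier R) ^ length bs - card (carrier R) ^ (length bs - 1)) ^ k
      \<le> card {w. length w = k \<and> set w \<subseteq> spn R bs \<and> lin_indep R (vs @ w)}"
proof (induction k)
  case 0
  have "{w. length w = 0 \<and> set w \<subseteq> spn R bs \<and> lin_indep R (vs @ w)} = {[]}" using vs by auto
  then show ?case by simp
next
  case (Suc k)
  let ?q = "card (carrier R)"
  let ?M = "length bs"
  let ?D = "?q ^ ?M - ?q ^ (?M - 1)"
  let ?S = "spn R bs"
  let ?W = "\<lambda>k. {w. length w = k \<and> set w \<subseteq> ?S \<and> lin_indep R (vs @ w)}"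
  have q1: "?q \<ge> 1" using fin carrier_not_empty by (simp add: Suc_le_eq card_gt_0_iff)
  have Sfin: "finite ?S" using finite_spn[OF fin bs(1)] .
  have Svec: "?S \<subseteq> vecs R N" using spn_vecs[OF bs(1)] .
  have cS: "card ?S = ?q ^ ?M" using card_spn_indep[OF fin bs(1,2)] .
  have Wfin: "finite (?W j)" for j
  proof -
    have "?W j \<subseteq> {w. set w \<subseteq> ?S \<and> length w = j}" by auto
    then show ?thesis using finite_lists_length_eq[OF Sfin] finite_subset by blast
  qed
  have IH: "?D ^ k \<le> card (?W k)" using Suc by simp
  have diff: "?D \<le> card (?S - spn R (vs @ w))" if w: "w \<in> ?W k" for w
  proof -
    have vw: "set (vs @ w) \<subseteq> vecs R N" using w vs(1) Svec by auto
    have "card (spn R (vs @ w)) \<le> ?q ^ length (vs @ w)" using card_spn_le[OF fin vw] .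
    also have "\<dots> \<le> ?q ^ (?M - 1)" using w Suc.prems by (intro power_increasing q1) auto
    finally have c1: "card (spn R (vs @ w)) \<le> ?q ^ (?M - 1)" .
    have "card ?S - card (spn R (vs @ w)) \<le> card (?S - spn R (vs @ w))"
      using finite_spn[OF fin vw] by (rule diff_card_le_card_Diff)
    then show ?thesis using c1 cS by linarith
  qed
  have sub: "(\<lambda>(w,x). w @ [x]) ` (SIGMA w:?W k. ?S - spn R (vs @ w)) \<subseteq> ?W (Suc k)"
  proof
    fix y assume "y \<in> (\<lambda>(w,x). w @ [x]) ` (SIGMA w:?W k. ?S - spn R (vs @ w))"
    then obtain w x where wx: "w \<in> ?W k" "x \<in> ?S" "x \<notin> spn R (vs @ w)" "y = w @ [x]" by auto
    have vw: "set (vs @ w) \<subseteq> vecs R N" using wx(1) vs(1) Svec by auto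
    have "lin_indep R ((vs @ w) @ [x])"
      using indep_snoc[OF _ vw _ wx(3)] wx(1,2) Svec by auto
    then show "y \<in> ?W (Suc k)" using wx by auto
  qed
  have inj: "inj_on (\<lambda>(w,x). w @ [x]) (SIGMA w:?W k. ?S - spn R (vs @ w))"
    by (rule inj_onI) auto
  have "card (SIGMA w:?W k. ?S - spn R (vs @ w)) = (\<Sum>w\<in>?W k. card (?S - spn R (vs @ w)))"
    using Wfin Sfin by (intro card_SigmaI) auto
  also have "\<dots> \<ge> (\<Sum>w\<in>?W k. ?D)" using diff by (intro sum_mono) auto
  finally have "card (?W k) * ?D \<le> card (SIGMA w:?W k. ?S - spn R (vs @ w))" by simp
  also have "\<dots> = card ((\<lambda>(w,x). w @ [x]) ` (SIGMA w:?W k. ?S - spn R (vs @ w)))"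
    using card_image[OF inj] by simp
  also have "\<dots> \<le> card (?W (Suc k))" using sub Wfin by (intro card_mono) auto
  finally have A: "card (?W k) * ?D \<le> card (?W (Suc k))" .
  have B: "?D ^ k * ?D \<le> card (?W k) * ?D" using IH by (rule mult_le_mono1)
  have "?D ^ Suc k \<le> card (?W (Suc k))" unfolding power_Suc2 using order_trans[OF B A] .
  then show ?case .
qed

end

definition Good :: "('a,'m) ring_scheme \<Rightarrow> (nat \<Rightarrow> (nat \<Rightarrow> 'a) set) \<Rightarrow> nat \<Rightarrow> (nat \<Rightarrow> 'a) set
    \<Rightarrow> nat list \<times> (nat \<Rightarrow> 'a) list \<Rightarrow> bool" where
  "Good R A n S p \<longleftrightarrow> distinct (fst p) \<and> set (fst p) \<subseteq> {1..n+1} \<and> length (snd p) = length (fst p) \<and>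
     (\<forall>k<length (fst p). snd p ! k \<in> S \<and> snd p ! k \<in> A (fst p ! k) \<and> snd p ! k \<noteq> vzero R) \<and>
     lin_indep R (snd p)"

definition Good2 :: "('a,'m) ring_scheme \<Rightarrow> (nat \<Rightarrow> (nat \<Rightarrow> 'a) set) \<Rightarrow> nat \<Rightarrow> (nat \<Rightarrow> 'a) set
    \<Rightarrow> nat list \<times> (nat \<Rightarrow> 'a) list \<Rightarrow> bool" where
  "Good2 R A n S p \<longleftrightarrow> Good R A n S p \<and> (\<forall>i\<in>{1..n+1} - set (fst p). meets R (spn R (snd p)) (A i))"

context field
begin

lemma Good_len: "Good R A n S p \<Longrightarrow> length (fst p) \<le> n + 1"
proof -
  assume g: "Good R A n S p"
  then have "length (fst p) = card (set (fst p))" unfolding Good_def by (simp add: distinct_card)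
  also have "\<dots> \<le> card {1..n+1}" using g unfolding Good_def by (intro card_mono) auto
  finally show ?thesis by simp
qed

lemma exists_Good2:
  assumes S: "S \<subseteq> vecs R N" and m: "\<forall>i\<in>{1..n+1}. meets R S (A i)"
  shows "\<exists>p. Good2 R A n S p"
proof -
  let ?P = "\<lambda>l. \<exists>p. Good R A n S p \<and> length (fst p) = l"
  have P0: "?P 0" by (rule exI[of _ "([],[])"]) (simp add: Good_def lin_indep_Nil)
  have bd: "\<forall>y. ?P y \<longrightarrow> y \<le> n + 1" using Good_len by blast
  obtain l where l: "?P l" and lmax: "\<forall>y. ?P y \<longrightarrow> y \<le> l"
    using Nat.ex_has_greatest_nat[of ?P 0 "n+1", OF P0 bd] by blast
  obtain p where p: "Good R A n S p" "length (fst p) = l" using l by blast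
  obtain js vs where jv: "p = (js, vs)" by fastforce
  have g: "distinct js" "set js \<subseteq> {1..n+1}" "length vs = length js"
    "\<forall>k<length js. vs ! k \<in> S \<and> vs ! k \<in> A (js ! k) \<and> vs ! k \<noteq> vzero R" "lin_indep R vs"
    using p(1) unfolding Good_def jv by simp_all
  have vsvec: "set vs \<subseteq> vecs R N"
  proof
    fix y assume "y \<in> set vs"
    then obtain k where k: "k < length vs" "y = vs ! k" by (auto simp: in_set_conv_nth)
    then show "y \<in> vecs R N" using g(3,4) S by auto
  qed
  have "\<forall>i\<in>{1..n+1} - set js. meets R (spn R vs) (A i)"
  proof
    fix i assume i: "i \<in> {1..n+1} - set js"
    then obtain x where x: "x \<in> S" "x \<in> A i" "x \<noteq> vzero R" using m unfolding meets_def by blast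
    show "meets R (spn R vs) (A i)"
    proof (cases "x \<in> spn R vs")
      case True
      then show ?thesis using x unfolding meets_def by blast
    next
      case False
      have xv: "x \<in> vecs R N" using x S by blast
      have "Good R A n S (js @ [i], vs @ [x])"
        unfolding Good_def fst_conv snd_conv
      proof (intro conjI)
        show "distinct (js @ [i])" using g(1) i by simp
        show "set (js @ [i]) \<subseteq> {1..n+1}" using g(2) i by simp
        show "length (vs @ [x]) = length (js @ [i])" using g(3) by simp
        show "lin_indep R (vs @ [x])" by (rule indep_snoc[OF g(5) vsvec xv False])
        show "\<forall>k<length (js @ [i]). (vs @ [x]) ! k \<in> S \<and> (vs @ [x]) ! k \<in> A ((js @ [i]) ! k) \<and> (vs @ [x]) ! k \<noteq> vzero R"
        proof (intro allI impI)
          fix k assume k: "k < length (js @ [i])"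
          show "(vs @ [x]) ! k \<in> S \<and> (vs @ [x]) ! k \<in> A ((js @ [i]) ! k) \<and> (vs @ [x]) ! k \<noteq> vzero R"
          proof (cases "k < length js")
            case True then show ?thesis using g(3,4) by (simp add: nth_append)
          next
            case False
            then have "k = length js" using k by simp
            then show ?thesis using g(3) x by (simp add: nth_append)
          qed
        qed
      qed
      then have "?P (Suc l)" using p(2) jv g(3) by (intro exI[of _ "(js @ [i], vs @ [x])"]) simp
      then show ?thesis using lmax by fastforce
    qed
  qed
  then have "Good2 R A n S (js, vs)" using p(1) jv unfolding Good2_def by simp
  then show ?thesis by blast
qed

end

context field
begin

lemma card_nonzero: "card (carrier R - {\<zero>}) = card (carrier R) - 1"
  by (simp add: card_Diff_singleton_if)

lemma fiber:
  assumes fin: "finite (carrier R)"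
    and As: "\<forall>i\<in>{1..n+1}. lsubspace R N (A i)"
    and bs: "set bs \<subseteq> vecs R N" "lin_indep R bs" "length bs = n + 1" and S: "S = spn R bs"
    and g: "Good2 R A n S (js, vs)"
    and F: "F = (\<lambda>(c,w). (scl R c vs, w)) ` (PiE {..<length js} (\<lambda>_. carrier R - {\<zero>})
               \<times> {w. length w = n + 1 - length js \<and> set w \<subseteq> S \<and> lin_indep R (vs @ w)})"
  shows "F \<subseteq> Gset R A js ({1..n+1} - set js) \<times> {w. set w \<subseteq> vecs R N \<and> length w = n + 1 - length js}"
    and "\<forall>x\<in>F. spn R (fst x @ snd x) = S"
    and "(card (carrier R) - 1) ^ length js * (card (carrier R) ^ (n+1) - card (carrier R) ^ n) ^ (n + 1 - length js)
         \<le> card F"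
proof -
  let ?q = "card (carrier R)"
  let ?t = "length js"
  let ?d = "n + 1 - length js"
  let ?Cnz = "PiE {..<?t} (\<lambda>_. carrier R - {\<zero>})"
  let ?WW = "{w. length w = ?d \<and> set w \<subseteq> S \<and> lin_indep R (vs @ w)}"
  have gg: "distinct js" "set js \<subseteq> {1..n+1}" "length vs = length js"
    "\<forall>k<length js. vs ! k \<in> S \<and> vs ! k \<in> A (js ! k) \<and> vs ! k \<noteq> vzero R" "lin_indep R vs"
    "\<forall>i\<in>{1..n+1} - set js. meets R (spn R vs) (A i)"
    using g unfolding Good2_def Good_def by simp_all
  have gd: "Good R A n S (js, vs)" using g unfolding Good2_def by simp
  have "length (fst (js, vs)) \<le> n + 1" by (rule Good_len[OF gd])
  then have tle: "?t \<le> n + 1" by simp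
  have Slsub: "lsubspace R N S" using lsubspace_spn[OF bs(1)] S by simp
  have Svec: "S \<subseteq> vecs R N" using Slsub lsub_vecs by blast
  have vsS: "set vs \<subseteq> S"
  proof
    fix y assume "y \<in> set vs"
    then obtain k where k: "k < length vs" "y = vs ! k" by (auto simp: in_set_conv_nth)
    then show "y \<in> S" using gg(3,4) by auto
  qed
  have vsvec: "set vs \<subseteq> vecs R N" using vsS Svec by blast
  have Ajs: "\<forall>k<?t. lsubspace R N (A (js ! k))"
  proof (intro allI impI)
    fix k assume "k < ?t"
    then have "js ! k \<in> {1..n+1}" using gg(2) nth_mem by blast
    then show "lsubspace R N (A (js ! k))" using As by blast
  qed
  show A: "F \<subseteq> Gset R A js ({1..n+1} - set js) \<times> {w. set w \<subseteq> vecs R N \<and> length w = ?d}"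
  proof
    fix x assume "x \<in> F"
    then obtain y where y: "y \<in> ?Cnz \<times> ?WW" "x = (\<lambda>(c,w). (scl R c vs, w)) y"
      unfolding F by (rule imageE)
    obtain c w where yc: "y = (c, w)" by (cases y)
    have cw: "c \<in> ?Cnz" "w \<in> ?WW" "x = (scl R c vs, w)" using y unfolding yc by simp_all
    have cc: "\<forall>j<length vs. c j \<in> carrier R - {\<zero>}" using cw(1) gg(3) by auto
    have cc': "\<forall>j<length vs. c j \<in> carrier R" using cc by blast
    have "scl R c vs \<in> Gset R A js ({1..n+1} - set js)"
      unfolding Gset_def
    proof (intro CollectI conjI allI impI ballI)
      show "length (scl R c vs) = length js" using gg(3) by simp
    next
      fix k assume k: "k < length js"
      have L: "lsubspace R N (A (js ! k))" using Ajs k by blast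
      have "vs ! k \<in> A (js ! k)" using gg(4) k by blast
      moreover have "c k \<in> carrier R" using cc' k gg(3) by simp
      ultimately have "vsmult R (c k) (vs ! k) \<in> A (js ! k)"
        using L unfolding lsubspace_def by blast
      then show "scl R c vs ! k \<in> A (js ! k)" using k gg(3) by simp
    next
      fix i assume i: "i \<in> {1..n+1} - set js"
      have "spn R (scl R c vs) = spn R vs" by (rule spn_scl[OF fin gg(5) vsvec cc])
      then show "meets R (spn R (scl R c vs)) (A i)" using gg(6) i by simp
    qed
    moreover have "w \<in> {w. set w \<subseteq> vecs R N \<and> length w = ?d}" using cw(2) Svec by auto
    ultimately show "x \<in> Gset R A js ({1..n+1} - set js) \<times> {w. set w \<subseteq> vecs R N \<and> length w = ?d}"
      using cw(3) by simp
  qed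
  show "\<forall>x\<in>F. spn R (fst x @ snd x) = S"
  proof
    fix x assume "x \<in> F"
    then obtain y where y: "y \<in> ?Cnz \<times> ?WW" "x = (\<lambda>(c,w). (scl R c vs, w)) y"
      unfolding F by (rule imageE)
    obtain c w where yc: "y = (c, w)" by (cases y)
    have cw: "c \<in> ?Cnz" "w \<in> ?WW" "x = (scl R c vs, w)" using y unfolding yc by simp_all
    let ?c' = "\<lambda>k. if k < length vs then c k else \<one>"
    have wvec: "set w \<subseteq> vecs R N" using cw(2) Svec by auto
    have eq: "scl R ?c' (vs @ w) = scl R c vs @ w" by (rule scl_append[OF wvec])
    have vw: "set (vs @ w) \<subseteq> vecs R N" using vsvec wvec by simp
    have c'nz: "\<forall>j<length (vs @ w). ?c' j \<in> carrier R - {\<zero>}" using cw(1) gg(3) by auto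
    have ind: "lin_indep R (scl R ?c' (vs @ w))"
      by (rule indep_scl[OF _ vw c'nz]) (use cw(2) in simp)
    have vwS: "set (vs @ w) \<subseteq> S" using vsS cw(2) by simp
    have sub: "set (scl R ?c' (vs @ w)) \<subseteq> spn R bs"
    proof
      fix y assume "y \<in> set (scl R ?c' (vs @ w))"
      then obtain k where k: "k < length (vs @ w)" "y = vsmult R (?c' k) ((vs @ w) ! k)"
        by (auto simp: in_set_conv_nth)
      have "(vs @ w) ! k \<in> S" using vwS k(1) nth_mem by blast
      moreover have "?c' k \<in> carrier R" using c'nz k(1) by blast
      ultimately have "y \<in> S" using Slsub k(2) unfolding lsubspace_def by simp
      then show "y \<in> spn R bs" using S by simp
    qed
    have len: "length (scl R ?c' (vs @ w)) = length bs" using cw(2) gg(3) tle bs(3) by simp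
    have "spn R (scl R ?c' (vs @ w)) = spn R bs" by (rule spn_eq_full[OF fin bs(1,2) sub ind len])
    then show "spn R (fst x @ snd x) = S" using eq cw(3) S by simp
  qed
  have inj: "inj_on (\<lambda>(c,w). (scl R c vs, w)) (?Cnz \<times> ?WW)"
  proof (rule inj_onI)
    fix x y assume x: "x \<in> ?Cnz \<times> ?WW" and y: "y \<in> ?Cnz \<times> ?WW"
      and e: "(\<lambda>(c,w). (scl R c vs, w)) x = (\<lambda>(c,w). (scl R c vs, w)) y"
    obtain c w where xc: "x = (c, w)" by (cases x)
    obtain c' w' where yc: "y = (c', w')" by (cases y)
    have e1: "scl R c vs = scl R c' vs" and e2: "w = w'" using e xc yc by simp_all
    have c: "c \<in> ?Cnz" and c': "c' \<in> ?Cnz" using x y xc yc by auto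
    have "c = c'"
    proof (rule PiE_ext[OF c c'])
      fix k assume k: "k \<in> {..<?t}"
      then have kk: "k < length vs" using gg(3) by simp
      have "scl R c vs ! k = scl R c' vs ! k" using e1 by simp
      then have "vsmult R (c k) (vs ! k) = vsmult R (c' k) (vs ! k)" using kk by simp
      moreover have "vs ! k \<in> vecs R N" using vsvec kk nth_mem by blast
      moreover have "vs ! k \<noteq> vzero R" using gg(4) kk gg(3) by simp
      moreover have "c k \<in> carrier R" "c' k \<in> carrier R" using c c' k by auto
      ultimately show "c k = c' k" using smult_cancel by blast
    qed
    then show "x = y" using xc yc e2 by simp
  qed
  have Sfin: "finite S" using finite_spn[OF fin bs(1)] S by simp
  have WWfin: "finite ?WW"
  proof -
    have "?WW \<subseteq> {w. set w \<subseteq> S \<and> length w = ?d}" by auto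
    then show ?thesis using finite_lists_length_eq[OF Sfin] finite_subset by blast
  qed
  have cC: "card ?Cnz = (?q - 1) ^ ?t" by (simp add: card_PiE card_nonzero)
  have cW: "(?q ^ (n+1) - ?q ^ n) ^ ?d \<le> card ?WW"
  proof -
    have "?d + length vs \<le> length bs" using gg(3) bs(3) tle by simp
    then have "(?q ^ length bs - ?q ^ (length bs - 1)) ^ ?d
        \<le> card {w. length w = ?d \<and> set w \<subseteq> spn R bs \<and> lin_indep R (vs @ w)}"
      using W_lower[OF fin bs(1,2) _ gg(5)] vsS S by blast
    then show ?thesis using bs(3) S by simp
  qed
  have "card F = card (?Cnz \<times> ?WW)" unfolding F by (rule card_image[OF inj])
  also have "\<dots> = card ?Cnz * card ?WW" by (rule card_cartesian_product)
  finally have "card F = (?q - 1) ^ ?t * card ?WW" using cC by simp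
  then show "(?q - 1) ^ ?t * (?q ^ (n+1) - ?q ^ n) ^ ?d \<le> card F" using cW by simp
qed

end

context field
begin

lemma count_js:
  assumes fin: "finite (carrier R)"
    and As: "\<forall>i\<in>{1..n+1}. lsubspace R N (A i)"
    and js: "set js \<subseteq> {1..n+1}"
    and Sset: "\<forall>S\<in>Sset. \<exists>bs. set bs \<subseteq> vecs R N \<and> lin_indep R bs \<and> length bs = n + 1 \<and> S = spn R bs"
    and sel: "\<forall>S\<in>Sset. Good2 R A n S (js, vsel S)"
  shows "card Sset * ((card (carrier R) - 1) ^ length js *
            (card (carrier R) ^ (n+1) - card (carrier R) ^ n) ^ (n + 1 - length js))
         \<le> card (Gset R A js ({1..n+1} - set js)) * card (carrier R) ^ (N * (n + 1 - length js))"
proof (cases "finite Sset")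
  case False
  then show ?thesis by simp
next
  case True
  let ?q = "card (carrier R)"
  let ?t = "length js"
  let ?d = "n + 1 - length js"
  let ?I = "{1..n+1} - set js"
  let ?Cnz = "PiE {..<?t} (\<lambda>_. carrier R - {\<zero>})"
  let ?F = "\<lambda>S. (\<lambda>(c,w). (scl R c (vsel S), w)) ` (?Cnz
               \<times> {w. length w = ?d \<and> set w \<subseteq> S \<and> lin_indep R (vsel S @ w)})"
  let ?Lw = "{w. set w \<subseteq> vecs R N \<and> length w = ?d}"
  let ?T = "Gset R A js ?I \<times> ?Lw"
  let ?L = "(?q - 1) ^ ?t * (?q ^ (n+1) - ?q ^ n) ^ ?d"
  have Avec: "\<forall>j\<in>set js. A j \<subseteq> vecs R N" using As js lsub_vecs by blast
  have Gfin: "finite (Gset R A js ?I)" by (rule Gset_finite[OF fin Avec])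
  have Lwfin: "finite ?Lw" by (rule finite_lists_length_eq[OF finite_vecs[OF fin]])
  have Tfin: "finite ?T" using Gfin Lwfin by simp
  have fib: "?F S \<subseteq> ?T \<and> (\<forall>x\<in>?F S. spn R (fst x @ snd x) = S) \<and> ?L \<le> card (?F S)" if S: "S \<in> Sset" for S
  proof -
    obtain bs where bs: "set bs \<subseteq> vecs R N" "lin_indep R bs" "length bs = n + 1" "S = spn R bs"
      using Sset S by blast
    have g: "Good2 R A n S (js, vsel S)" using sel S by blast
    note f = fiber[OF fin As bs g refl]
    show ?thesis using f(1) f(2) f(3) by blast
  qed
  have Ffin: "finite (?F S)" if "S \<in> Sset" for S using fib[OF that] Tfin finite_subset by blast
  have disj: "\<forall>S\<in>Sset. \<forall>S'\<in>Sset. S \<noteq> S' \<longrightarrow> ?F S \<inter> ?F S' = {}"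
  proof (intro ballI impI)
    fix S S' assume S: "S \<in> Sset" and S': "S' \<in> Sset" and ne: "S \<noteq> S'"
    show "?F S \<inter> ?F S' = {}"
    proof (rule ccontr)
      assume "?F S \<inter> ?F S' \<noteq> {}"
      then obtain x where x: "x \<in> ?F S" "x \<in> ?F S'" by blast
      have "spn R (fst x @ snd x) = S" using fib[OF S] x(1) by blast
      moreover have "spn R (fst x @ snd x) = S'" using fib[OF S'] x(2) by blast
      ultimately show False using ne by simp
    qed
  qed
  have "card Sset * ?L = (\<Sum>S\<in>Sset. ?L)" by simp
  also have "\<dots> \<le> (\<Sum>S\<in>Sset. card (?F S))" using fib by (intro sum_mono) blast
  also have "\<dots> = card (\<Union>S\<in>Sset. ?F S)" using True Ffin disj by (intro card_UN_disjoint[symmetric]) auto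
  also have "\<dots> \<le> card ?T"
  proof -
    have "(\<Union>S\<in>Sset. ?F S) \<subseteq> ?T" using fib by (intro UN_least) blast
    then show ?thesis by (rule card_mono[OF Tfin])
  qed
  also have "\<dots> = card (Gset R A js ?I) * card ?Lw" by (rule card_cartesian_product)
  also have "\<dots> \<le> card (Gset R A js ?I) * ?q ^ (N * ?d)"
  proof -
    have "card ?Lw = card (vecs R N) ^ ?d" by (rule card_lists_length_eq[OF finite_vecs[OF fin]])
    also have "\<dots> \<le> (?q ^ N) ^ ?d" by (rule power_mono[OF card_vecs_le[OF fin]]) simp
    finally show ?thesis by (simp add: power_mult)
  qed
  finally show ?thesis .
qed

end

lemma exp_id:
  fixes t d n :: nat
  assumes td: "t + d = n + 1" and n: "n \<ge> 1"
  shows "t * n + Suc (2*n) * d = t + (n+1) * d + d + (n^2 - 1)"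
proof -
  have e1: "t * n + d * n = n * n + n" using td by (metis add_mult_distrib mult_Suc Suc_eq_plus1 add.commute)
  have n2: "n^2 \<ge> 1" using n by simp
  have "t * n + Suc (2*n) * d + 1 = t + (n+1) * d + d + n^2"
    using e1 td by (simp add: algebra_simps power2_eq_square)
  then show ?thesis using n2 by linarith
qed

lemma arith_main:
  fixes q t n c G K :: nat
  assumes q: "q \<ge> 2" and t: "t \<le> n + 1" and n: "n \<ge> 2" and K: "K \<ge> 1"
    and h1: "c * ((q - 1) ^ t * (q ^ (n+1) - q ^ n) ^ (n + 1 - t)) \<le> G * q ^ (Suc (2*n) * (n + 1 - t))"
    and h2: "G * q ^ (n + 1 - t) \<le> K ^ t * q ^ (t * n)"
  shows "c \<le> 2 ^ (n+1) * K ^ (n+1) * q ^ (n^2 - 1)"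
proof -
  define d where "d = n + 1 - t"
  have td: "t + d = n + 1" using t unfolding d_def by simp
  define E where "E = t + (n+1) * d + d"
  have a1: "q \<le> 2 * (q - 1)" using q by simp
  have a2: "q ^ (n+1) \<le> 2 * (q ^ (n+1) - q ^ n)"
  proof -
    have h: "2 * q ^ n \<le> q * q ^ n" using q by simp
    have e: "q ^ (n+1) = q * q ^ n" by simp
    show ?thesis unfolding e using h by linarith
  qed
  have b1: "q ^ t \<le> 2 ^ t * (q - 1) ^ t"
    using power_mono[OF a1, of t] by (simp add: power_mult_distrib)
  have b2: "q ^ ((n+1) * d) \<le> 2 ^ d * (q ^ (n+1) - q ^ n) ^ d"
  proof -
    have "q ^ ((n+1) * d) = (q ^ (n+1)) ^ d" by (rule power_mult)
    also have "\<dots> \<le> (2 * (q ^ (n+1) - q ^ n)) ^ d" by (rule power_mono[OF a2]) simp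
    also have "\<dots> = 2 ^ d * (q ^ (n+1) - q ^ n) ^ d" by (rule power_mult_distrib)
    finally show ?thesis .
  qed
  have "c * q ^ E = c * (q ^ t * q ^ ((n+1) * d) * q ^ d)" unfolding E_def by (simp add: power_add)
  also have "\<dots> \<le> c * ((2 ^ t * (q - 1) ^ t) * (2 ^ d * (q ^ (n+1) - q ^ n) ^ d) * q ^ d)"
    using b1 b2 by (intro mult_le_mono2 mult_le_mono1 mult_le_mono) auto
  also have "\<dots> = 2 ^ (t + d) * ((c * ((q - 1) ^ t * (q ^ (n+1) - q ^ n) ^ d)) * q ^ d)"
    by (simp add: power_add algebra_simps)
  also have "\<dots> \<le> 2 ^ (t + d) * ((G * q ^ (Suc (2*n) * d)) * q ^ d)"
    using h1 unfolding d_def by (intro mult_le_mono2 mult_le_mono1) simp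
  also have "\<dots> = 2 ^ (t + d) * ((G * q ^ d) * q ^ (Suc (2*n) * d))" by (simp add: algebra_simps)
  also have "\<dots> \<le> 2 ^ (t + d) * ((K ^ t * q ^ (t * n)) * q ^ (Suc (2*n) * d))"
    using h2 unfolding d_def by (intro mult_le_mono2 mult_le_mono1) simp
  also have "\<dots> = (2 ^ (n+1) * K ^ t * q ^ (n^2 - 1)) * q ^ E"
  proof -
    have "t * n + Suc (2*n) * d = E + (n^2 - 1)" unfolding E_def using exp_id[OF td] n by simp
    then show ?thesis using td by (simp add: power_add[symmetric] algebra_simps)
  qed
  finally have "c * q ^ E \<le> (2 ^ (n+1) * K ^ t * q ^ (n^2 - 1)) * q ^ E" .
  moreover have "q ^ E > 0" using q by simp
  ultimately have "c \<le> 2 ^ (n+1) * K ^ t * q ^ (n^2 - 1)" using mult_le_cancel2 by blast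
  also have "\<dots> \<le> 2 ^ (n+1) * K ^ (n+1) * q ^ (n^2 - 1)"
    using power_increasing[OF t K] by simp
  finally show ?thesis .
qed
context field
begin

lemma card_carrier_ge2: "finite (carrier R) \<Longrightarrow> card (carrier R) \<ge> 2"
proof -
  assume fin: "finite (carrier R)"
  have "{\<zero>, \<one>} \<subseteq> carrier R" by simp
  then have "card {\<zero>, \<one>} \<le> card (carrier R)" by (rule card_mono[OF fin])
  then show ?thesis by simp
qed

lemma main_bound:
  assumes fin: "finite (carrier R)" and n: "n \<ge> 2"
    and Ah: "\<forall>i\<in>{1..n+1}. proj_space R (2*n) (n-1) (A i)"
    and Sk: "\<forall>i\<in>{1..n+1}. \<forall>j\<in>{1..n+1}. i \<noteq> j \<longrightarrow> skew R (A i) (A j)"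
  shows "card {S. proj_space R (2*n) n S \<and> (\<forall>i\<in>{1..n+1}. meets R S (A i))}
     \<le> card {js. distinct js \<and> set js \<subseteq> {1..n+1}} *
        (2 ^ (n+1) * (2^(n+1)*(n+2)) ^ (n+1) * card (carrier R) ^ (n^2 - 1))"
proof -
  let ?N = "Suc (2*n)"
  let ?q = "card (carrier R)"
  let ?K = "(2::nat)^(n+1)*(n+2)"
  let ?DL = "{js. distinct js \<and> set js \<subseteq> {1..n+1}}"
  let ?Sset = "{S. proj_space R (2*n) n S \<and> (\<forall>i\<in>{1..n+1}. meets R S (A i))}"
  let ?B = "2 ^ (n+1) * ?K ^ (n+1) * ?q ^ (n^2 - 1)"
  have q2: "?q \<ge> 2" by (rule card_carrier_ge2[OF fin])
  have K1: "?K \<ge> 1" by (simp add: Suc_le_eq)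
  have Ai: "lsubspace R ?N (A i) \<and> card (A i) \<le> ?q ^ n" if i: "i \<in> {1..n+1}" for i
  proof -
    have "subspace_dim R ?N (Suc (n-1)) (A i)" using Ah i unfolding proj_space_def by blast
    moreover have "Suc (n - 1) = n" using n by simp
    ultimately have sd: "subspace_dim R ?N n (A i)" by simp
    then have L: "lsubspace R ?N (A i)" unfolding subspace_dim_def by blast
    obtain bs where bs: "length bs = n" "set bs \<subseteq> A i" "lin_indep R bs" "A i = spn R bs"
      using sd unfolding subspace_dim_def spn_def by blast
    have "set bs \<subseteq> vecs R ?N" using bs(2) lsub_vecs[OF L] by blast
    then have "card (A i) = ?q ^ n" using card_spn_indep[OF fin _ bs(3)] bs by simp
    then show ?thesis using L by simp
  qed
  have Avec: "A i \<subseteq> vecs R ?N" if "i \<in> {1..n+1}" for i using Ai[OF that] lsub_vecs by blast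
  have Sfacts: "lsubspace R ?N S \<and> (\<exists>bs. set bs \<subseteq> vecs R ?N \<and> lin_indep R bs \<and> length bs = n + 1 \<and> S = spn R bs)"
    if S: "S \<in> ?Sset" for S
  proof -
    have sd: "subspace_dim R ?N (Suc n) S" using S unfolding proj_space_def by simp
    then have L: "lsubspace R ?N S" unfolding subspace_dim_def by blast
    obtain bs where bs: "length bs = Suc n" "set bs \<subseteq> S" "lin_indep R bs" "S = spn R bs"
      using sd unfolding subspace_dim_def spn_def by blast
    have "set bs \<subseteq> vecs R ?N" using bs(2) lsub_vecs[OF L] by blast
    then show ?thesis using L bs by auto
  qed
  define sel where "sel S = (SOME p. Good2 R A n S p)" for S
  have selG: "Good2 R A n S (sel S)" if S: "S \<in> ?Sset" for S
  proof -
    have "S \<subseteq> vecs R ?N" using Sfacts[OF S] lsub_vecs by blast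
    moreover have "\<forall>i\<in>{1..n+1}. meets R S (A i)" using S by blast
    ultimately have "\<exists>p. Good2 R A n S p" by (rule exists_Good2)
    then show ?thesis unfolding sel_def by (rule someI_ex)
  qed
  have DLfin: "finite ?DL"
  proof -
    have "?DL \<subseteq> {xs. set xs \<subseteq> {1..n+1} \<and> length xs \<le> n + 1}"
    proof
      fix js assume js: "js \<in> ?DL"
      then have "length js = card (set js)" by (simp add: distinct_card)
      also have "\<dots> \<le> card {1..n+1}" using js by (intro card_mono) auto
      finally show "js \<in> {xs. set xs \<subseteq> {1..n+1} \<and> length xs \<le> n + 1}" using js by simp
    qed
    then show ?thesis using finite_lists_length_le[of "{1..n+1}" "n+1"] finite_subset by blast
  qed
  have cover: "?Sset = (\<Union>js\<in>?DL. {S \<in> ?Sset. fst (sel S) = js})"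
  proof
    show "?Sset \<subseteq> (\<Union>js\<in>?DL. {S \<in> ?Sset. fst (sel S) = js})"
    proof
      fix S assume S: "S \<in> ?Sset"
      have "fst (sel S) \<in> ?DL" using selG[OF S] unfolding Good2_def Good_def by blast
      then show "S \<in> (\<Union>js\<in>?DL. {S \<in> ?Sset. fst (sel S) = js})" using S by blast
    qed
  qed blast
  have each: "card {S \<in> ?Sset. fst (sel S) = js} \<le> ?B" if js: "js \<in> ?DL" for js
  proof -
    let ?Sj = "{S \<in> ?Sset. fst (sel S) = js}"
    let ?I = "{1..n+1} - set js"
    have jsd: "distinct js" and jss: "set js \<subseteq> {1..n+1}" using js by auto
    have tl: "length js \<le> n + 1"
    proof -
      have "length js = card (set js)" using jsd by (simp add: distinct_card)
      also have "\<dots> \<le> card {1..n+1}" using jss by (intro card_mono) auto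
      finally show ?thesis by simp
    qed
    have cI: "card ?I = n + 1 - length js"
    proof -
      have "card ?I = card {1..n+1} - card (set js)" using jss by (intro card_Diff_subset) auto
      then show ?thesis using jsd by (simp add: distinct_card)
    qed
    have As: "\<forall>i\<in>{1..n+1}. lsubspace R ?N (A i)" using Ai by blast
    have h1: "card ?Sj * ((?q - 1) ^ length js * (?q ^ (n+1) - ?q ^ n) ^ (n + 1 - length js))
         \<le> card (Gset R A js ?I) * ?q ^ (?N * (n + 1 - length js))"
    proof (rule count_js[OF fin As jss])
      show "\<forall>S\<in>?Sj. \<exists>bs. set bs \<subseteq> vecs R ?N \<and> lin_indep R bs \<and> length bs = n + 1 \<and> S = spn R bs"
        using Sfacts by blast
      show "\<forall>S\<in>?Sj. Good2 R A n S (js, snd (sel S))"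
      proof
        fix S assume S: "S \<in> ?Sj"
        have "sel S = (js, snd (sel S))" using S by (metis (mono_tags, lifting) mem_Collect_eq prod.collapse)
        then show "Good2 R A n S (js, snd (sel S))" using selG S by (metis (mono_tags, lifting) mem_Collect_eq)
      qed
    qed
    have h2: "card (Gset R A js ?I) * ?q ^ (card ?I) \<le> ?K ^ (length js) * ?q ^ (length js * n)"
    proof (rule G_bound[OF fin])
      show "\<forall>j\<in>set js. lsubspace R ?N (A j) \<and> card (A j) \<le> ?q ^ n" using Ai jss by blast
      show "\<forall>i\<in>?I. lsubspace R ?N (A i)" using Ai by blast
      show "\<forall>j\<in>set js. \<forall>i\<in>?I. A j \<inter> A i = {vzero R}"
      proof (intro ballI)
        fix j i assume j: "j \<in> set js" and i: "i \<in> ?I"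
        have "j \<noteq> i" using j i by blast
        then show "A j \<inter> A i = {vzero R}" using Sk j i jss unfolding skew_def by blast
      qed
      show "finite ?I" by simp
      show "length js + card ?I \<le> n + 1" using cI tl by simp
    qed
    have h2': "card (Gset R A js ?I) * ?q ^ (n + 1 - length js) \<le> ?K ^ (length js) * ?q ^ (length js * n)"
      using h2 cI by simp
    show ?thesis by (rule arith_main[OF q2 tl n K1 h1 h2'])
  qed
  have "card ?Sset \<le> (\<Sum>js\<in>?DL. card {S \<in> ?Sset. fst (sel S) = js})"
    unfolding cover[symmetric] using card_UN_le[OF DLfin, of "\<lambda>js. {S \<in> ?Sset. fst (sel S) = js}"]
    by (simp only: cover[symmetric])
  also have "\<dots> \<le> (\<Sum>js\<in>?DL. ?B)" using each by (intro sum_mono) blast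
  also have "\<dots> = card ?DL * ?B" by simp
  finally show ?thesis .
qed

end

theorem mainTheorem9:
  fixes n :: nat
  assumes "n \<ge> 2"
  shows "\<exists>C::real. \<forall>(R::nat ring) (A::nat \<Rightarrow> (nat \<Rightarrow> nat) set).
     field R \<and> finite (carrier R) \<and>
     (\<forall>i\<in>{1..n+1}. proj_space R (2*n) (n-1) (A i)) \<and>
     (\<forall>i\<in>{1..n+1}. \<forall>j\<in>{1..n+1}. i \<noteq> j \<longrightarrow> skew R (A i) (A j)) \<longrightarrow>
     real (card {S. proj_space R (2*n) n S \<and> (\<forall>i\<in>{1..n+1}. meets R S (A i))})
       \<le> C * real (card (carrier R)) ^ (n^2 - 1)"
proof (rule exI[of _ "real (card {js. distinct js \<and> set js \<subseteq> {1..n+1}} *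
        (2 ^ (n+1) * (2^(n+1)*(n+2)) ^ (n+1)))"], intro allI impI)
  fix R :: "nat ring" and A :: "nat \<Rightarrow> (nat \<Rightarrow> nat) set"
  assume H: "field R \<and> finite (carrier R) \<and>
     (\<forall>i\<in>{1..n+1}. proj_space R (2*n) (n-1) (A i)) \<and>
     (\<forall>i\<in>{1..n+1}. \<forall>j\<in>{1..n+1}. i \<noteq> j \<longrightarrow> skew R (A i) (A j))"
  have fR: "field R" using H by blast
  have b: "card {S. proj_space R (2*n) n S \<and> (\<forall>i\<in>{1..n+1}. meets R S (A i))}
     \<le> card {js. distinct js \<and> set js \<subseteq> {1..n+1}} *
        (2 ^ (n+1) * (2^(n+1)*(n+2)) ^ (n+1) * card (carrier R) ^ (n^2 - 1))"
    using field.main_bound[OF fR, of n A] H assms by blast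
  then have "real (card {S. proj_space R (2*n) n S \<and> (\<forall>i\<in>{1..n+1}. meets R S (A i))})
     \<le> real (card {js. distinct js \<and> set js \<subseteq> {1..n+1}} *
        (2 ^ (n+1) * (2^(n+1)*(n+2)) ^ (n+1) * card (carrier R) ^ (n^2 - 1)))"
    by (rule of_nat_mono)
  then show "real (card {S. proj_space R (2*n) n S \<and> (\<forall>i\<in>{1..n+1}. meets R S (A i))})
       \<le> real (card {js. distinct js \<and> set js \<subseteq> {1..n+1}} *
        (2 ^ (n+1) * (2^(n+1)*(n+2)) ^ (n+1))) * real (card (carrier R)) ^ (n^2 - 1)"
    by (simp add: mult.assoc)
qed

end
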